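(* Let $R$ be a semi-graded ring, $J$ a semi-graded ideal of $R$ and $f:R\to R/J$ the canonical map. Then the functor $f^*:\mathsf{SGR}\text{-}R\to\mathsf{SGR}\text{-}R/J$ is left adjoint to $f_*:\mathsf{SGR}\text{-}R/J\to\mathsf{SGR}\text{-}R$; i.e. there are bijections $\mathrm{Hom}_{\mathsf{SGR}\text{-}R}(M,f_*(N))\cong\mathrm{Hom}_{\mathsf{SGR}\text{-}R/J}(f^*(M),N)$ natural in $M\in\mathsf{SGR}\text{-}R$ and $N\in\mathsf{SGR}\text{-}R/J$.
   Context: Rings are associative with $1$; modules are left modules. A ring $R$ is semi-graded (SG) if there are additive subgroups $R_n$ ($n\in\mathbb{Z}$) with $R=\bigoplus_n R_n$, $R_mR_n\subseteq\bigoplus_{k\le m+n}R_k$, and $1\in R_0$. An $R$-module $M$ is SG if $M=\bigoplus_nM_n$ (additive subgroups) with $R_mM_n\subseteq\bigoplus_{k\le m+n}M_k$ for $m\ge0$, $n\in\mathbb{Z}$; a homomorphism of SG modules is homogeneous if it maps $M_n$ into $N_n$. A submodule $N'$ is an SG submodule if $N'=\bigoplus_n(N'\cap M_n)$; then $M/N'$ is SG with $(M/N')_n=(M_n+N')/N'$. For $X\subseteq M$, $\langle X\rangle^{\mathsf{SG}}$ is the intersection of all SG submodules containing $X$. $\mathsf{SGR}\text{-}R$ is the category of SG $R$-modules and homogeneous $R$-homomorphisms. An SG ideal $J$ is a two-sided ideal that is an SG submodule of $R$; $R/J$ is SG with $(R/J)_n=(R_n+J)/J$. $f_*$ is restriction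 of scalars along $f$ (same semi-graduation, morphisms unchanged). $f^*(M)=M/\langle JM\rangle^{\mathsf{SG}}$, an SG $R/J$-module via $\overline a\cdot\overline m=\overline{am}$, and $f^*(\alpha)(\overline m)=\overline{\alpha(m)}$ for a morphism $\alpha$. *)

theory Defs
  imports "HOL-Algebra.QuotRing" "HOL-Algebra.Module" "HOL-Library.FuncSet"
begin

text \<open>Left modules over a (not necessarily commutative) ring, using the
  HOL-Algebra module record and the module axioms (without commutativity).\<close>

definition lmodule :: "('r, 'c) ring_scheme \<Rightarrow> ('r, 'm, 'd) module_scheme \<Rightarrow> bool" where
  "lmodule R M \<equiv> ring R \<and> abelian_group M \<and> module_axioms R M"

definition lmod_hom :: "('r, 'c) ring_scheme \<Rightarrow> ('r, 'm, 'd) module_scheme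
    \<Rightarrow> ('r, 'n, 'e) module_scheme \<Rightarrow> ('m \<Rightarrow> 'n) set" where
  "lmod_hom R M N = {f. f \<in> carrier M \<rightarrow> carrier N
     \<and> (\<forall>x\<in>carrier M. \<forall>y\<in>carrier M. f (x \<oplus>\<^bsub>M\<^esub> y) = f x \<oplus>\<^bsub>N\<^esub> f y)
     \<and> (\<forall>a\<in>carrier R. \<forall>x\<in>carrier M. f (smult M a x) = smult N a (f x))}"

definition lsubmodule :: "('r, 'c) ring_scheme \<Rightarrow> ('r, 'm, 'd) module_scheme \<Rightarrow> 'm set \<Rightarrow> bool" where
  "lsubmodule R M N' \<equiv> N' \<subseteq> carrier M \<and> subgroup N' (add_monoid M)
     \<and> (\<forall>a\<in>carrier R. \<forall>x\<in>N'. smult M a x \<in> N')"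

definition int_sum :: "('m, 'c) ring_scheme \<Rightarrow> (int \<Rightarrow> 'm set) \<Rightarrow> 'm set" where
  "int_sum M S = {x. \<exists>c. (\<forall>n. c n \<in> S n) \<and> finite {n. c n \<noteq> \<zero>\<^bsub>M\<^esub>}
      \<and> x = finsum M c {n. c n \<noteq> \<zero>\<^bsub>M\<^esub>}}"

definition int_sum_le :: "('m, 'c) ring_scheme \<Rightarrow> (int \<Rightarrow> 'm set) \<Rightarrow> int \<Rightarrow> 'm set" where
  "int_sum_le M S N = int_sum M (\<lambda>k. if k \<le> N then S k else {\<zero>\<^bsub>M\<^esub>})"

definition is_dsum :: "('m, 'c) ring_scheme \<Rightarrow> (int \<Rightarrow> 'm set) \<Rightarrow> bool" where
  "is_dsum M S \<equiv> (\<forall>n. subgroup (S n) (add_monoid M)) \<and> carrier M = int_sum M S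
     \<and> (\<forall>c d. (\<forall>n. c n \<in> S n) \<and> (\<forall>n. d n \<in> S n)
          \<and> finite {n. c n \<noteq> \<zero>\<^bsub>M\<^esub>} \<and> finite {n. d n \<noteq> \<zero>\<^bsub>M\<^esub>}
          \<and> finsum M c {n. c n \<noteq> \<zero>\<^bsub>M\<^esub>} = finsum M d {n. d n \<noteq> \<zero>\<^bsub>M\<^esub>}
          \<longrightarrow> c = d)"

definition sg_ring :: "('r, 'c) ring_scheme \<Rightarrow> (int \<Rightarrow> 'r set) \<Rightarrow> bool" where
  "sg_ring R Rg \<equiv> ring R \<and> is_dsum R Rg
     \<and> (\<forall>m n. \<forall>a\<in>Rg m. \<forall>b\<in>Rg n. a \<otimes>\<^bsub>R\<^esub> b \<in> int_sum_le R Rg (m + n))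
     \<and> \<one>\<^bsub>R\<^esub> \<in> Rg 0"

definition sg_module :: "('r, 'c) ring_scheme \<Rightarrow> (int \<Rightarrow> 'r set)
    \<Rightarrow> ('r, 'm, 'd) module_scheme \<Rightarrow> (int \<Rightarrow> 'm set) \<Rightarrow> bool" where
  "sg_module R Rg M Mg \<equiv> lmodule R M \<and> is_dsum M Mg
     \<and> (\<forall>m n. m \<ge> 0 \<longrightarrow> (\<forall>a\<in>Rg m. \<forall>x\<in>Mg n. smult M a x \<in> int_sum_le M Mg (m + n)))"

definition sg_submodule :: "('r, 'c) ring_scheme \<Rightarrow> ('r, 'm, 'd) module_scheme
    \<Rightarrow> (int \<Rightarrow> 'm set) \<Rightarrow> 'm set \<Rightarrow> bool" where
  "sg_submodule R M Mg N' \<equiv> lsubmodule R M N' \<and> N' = int_sum M (\<lambda>n. N' \<inter> Mg n)"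

definition sg_gen :: "('r, 'c) ring_scheme \<Rightarrow> ('r, 'm, 'd) module_scheme
    \<Rightarrow> (int \<Rightarrow> 'm set) \<Rightarrow> 'm set \<Rightarrow> 'm set" where
  "sg_gen R M Mg X = \<Inter>{N'. sg_submodule R M Mg N' \<and> X \<subseteq> N'}"

definition sg_ideal :: "('r, 'c) ring_scheme \<Rightarrow> (int \<Rightarrow> 'r set) \<Rightarrow> 'r set \<Rightarrow> bool" where
  "sg_ideal R Rg J \<equiv> ideal J R \<and> J = int_sum R (\<lambda>n. J \<inter> Rg n)"

text \<open>Homogeneous homomorphisms (taken extensional, so that Hom-sets are sets
  of genuine maps on the carrier).\<close>
definition sg_hom :: "('r, 'c) ring_scheme \<Rightarrow> ('r, 'm, 'd) module_scheme \<Rightarrow> (int \<Rightarrow> 'm set)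
    \<Rightarrow> ('r, 'n, 'e) module_scheme \<Rightarrow> (int \<Rightarrow> 'n set) \<Rightarrow> ('m \<Rightarrow> 'n) set" where
  "sg_hom R M Mg N Ng = {f. f \<in> lmod_hom R M N \<and> (\<forall>n. f ` Mg n \<subseteq> Ng n)
      \<and> f \<in> extensional (carrier M)}"

definition quot_grading :: "('r, 'c) ring_scheme \<Rightarrow> 'r set \<Rightarrow> (int \<Rightarrow> 'r set) \<Rightarrow> int \<Rightarrow> 'r set set" where
  "quot_grading R J Rg n = (\<lambda>r. J +>\<^bsub>R\<^esub> r) ` Rg n"

definition push :: "('r, 'c) ring_scheme \<Rightarrow> 'r set \<Rightarrow> ('r set, 'n) module \<Rightarrow> ('r, 'n) module" where
  "push R J N = \<lparr>carrier = carrier N, mult = mult N, one = one N, zero = zero N, add = add N,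
      smult = (\<lambda>r x. smult N (J +>\<^bsub>R\<^esub> r) x)\<rparr>"

definition ideal_times :: "'r set \<Rightarrow> ('r, 'm, 'd) module_scheme \<Rightarrow> 'm set" where
  "ideal_times J M = {smult M a x | a x. a \<in> J \<and> x \<in> carrier M}"

definition pull_sub :: "('r, 'c) ring_scheme \<Rightarrow> 'r set \<Rightarrow> ('r, 'm) module \<Rightarrow> (int \<Rightarrow> 'm set) \<Rightarrow> 'm set" where
  "pull_sub R J M Mg = sg_gen R M Mg (ideal_times J M)"

text \<open>f^*(M) = M / <JM>^SG as an R/J-module, with (a+J).(m+L) = am+L.\<close>
definition pull :: "('r, 'c) ring_scheme \<Rightarrow> 'r set \<Rightarrow> ('r, 'm) module \<Rightarrow> (int \<Rightarrow> 'm set)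
    \<Rightarrow> ('r set, 'm set) module" where
  "pull R J M Mg = (let L = pull_sub R J M Mg in
     \<lparr>carrier = a_rcosets\<^bsub>M\<^esub> L, mult = (\<lambda>X Y. X <+>\<^bsub>M\<^esub> Y), one = L, zero = L,
      add = (\<lambda>X Y. X <+>\<^bsub>M\<^esub> Y),
      smult = (\<lambda>A X. \<Union>a\<in>A. \<Union>x\<in>X. L +>\<^bsub>M\<^esub> smult M a x)\<rparr>)"

definition pull_grading :: "('r, 'c) ring_scheme \<Rightarrow> 'r set \<Rightarrow> ('r, 'm) module \<Rightarrow> (int \<Rightarrow> 'm set)
    \<Rightarrow> int \<Rightarrow> 'm set set" where
  "pull_grading R J M Mg n = (\<lambda>x. pull_sub R J M Mg +>\<^bsub>M\<^esub> x) ` Mg n"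

text \<open>f^*(beta)(m+L) = beta(m)+L'.\<close>
definition pull_map :: "('r, 'c) ring_scheme \<Rightarrow> 'r set \<Rightarrow> ('r, 'm) module \<Rightarrow> (int \<Rightarrow> 'm set)
    \<Rightarrow> ('r, 'k) module \<Rightarrow> (int \<Rightarrow> 'k set) \<Rightarrow> ('m \<Rightarrow> 'k) \<Rightarrow> 'm set \<Rightarrow> 'k set" where
  "pull_map R J M Mg M' Mg' \<beta> =
     (\<lambda>X\<in>carrier (pull R J M Mg). the_elem ((\<lambda>x. pull_sub R J M' Mg' +>\<^bsub>M'\<^esub> \<beta> x) ` X))"

text \<open>The canonical map Hom(M, f_*N) to Hom(f^*M, N), alpha maps to (m+L maps to alpha(m)).\<close>
definition adj_map :: "('r, 'c) ring_scheme \<Rightarrow> 'r set \<Rightarrow> ('r, 'm) module \<Rightarrow> (int \<Rightarrow> 'm set)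
    \<Rightarrow> ('m \<Rightarrow> 'n) \<Rightarrow> 'm set \<Rightarrow> 'n" where
  "adj_map R J M Mg \<alpha> = (\<lambda>X\<in>carrier (pull R J M Mg). the_elem (\<alpha> ` X))"

end

theory Submission
  imports Defs
begin
lemma finsum_supp_eq:
  assumes "abelian_monoid M" "finite F" "{n. c n \<noteq> \<zero>\<^bsub>M\<^esub>} \<subseteq> F" "\<And>n. c n \<in> carrier M"
  shows "finsum M c {n. c n \<noteq> \<zero>\<^bsub>M\<^esub>} = finsum M c F"
proof -
  interpret abelian_monoid M by fact
  show ?thesis
    by (rule add.finprod_mono_neutral_cong_left) (use assms in auto)
qed

lemma add_hom_zero:
  assumes "abelian_group A" "abelian_group B" "\<forall>x\<in>carrier A. h x \<in> carrier B"
    "\<forall>x\<in>carrier A. \<forall>y\<in>carrier A. h (x \<oplus>\<^bsub>A\<^esub> y) = h x \<oplus>\<^bsub>B\<^esub> h y"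
  shows "h \<zero>\<^bsub>A\<^esub> = \<zero>\<^bsub>B\<^esub>"
proof -
  interpret A: abelian_group A by fact
  interpret B: abelian_group B by fact
  have "h \<zero>\<^bsub>A\<^esub> \<oplus>\<^bsub>B\<^esub> h \<zero>\<^bsub>A\<^esub> = h \<zero>\<^bsub>A\<^esub>"
    using assms(3,4) by (metis A.l_zero A.zero_closed)
  then show ?thesis using assms(3) A.zero_closed B.add.l_cancel_one by blast
qed

lemma hom_finsum:
  assumes "abelian_group A" "abelian_group B" "\<forall>x\<in>carrier A. h x \<in> carrier B"
    "\<forall>x\<in>carrier A. \<forall>y\<in>carrier A. h (x \<oplus>\<^bsub>A\<^esub> y) = h x \<oplus>\<^bsub>B\<^esub> h y"
    "finite F" "c \<in> F \<rightarrow> carrier A"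
  shows "h (finsum A c F) = finsum B (h \<circ> c) F"
  using assms(5,6)
proof (induction F rule: finite_induct)
  case empty
  then show ?case using add_hom_zero[OF assms(1-4)]
    by (simp add: abelian_monoid.finsum_empty[OF abelian_group.axioms(1)[OF assms(1)]]
        abelian_monoid.finsum_empty[OF abelian_group.axioms(1)[OF assms(2)]])
next
  case (insert x F)
  interpret A: abelian_group A by fact
  interpret B: abelian_group B by fact
  have c: "c \<in> F \<rightarrow> carrier A" "c x \<in> carrier A" using insert by auto
  have fc: "finsum A c F \<in> carrier A" using c(1) by (rule A.finsum_closed)
  have ih: "h (finsum A c F) = finsum B (h \<circ> c) F" using insert.IH c(1) by blast
  have hc: "h \<circ> c \<in> F \<rightarrow> carrier B" "(h \<circ> c) x \<in> carrier B" using c assms(3) by auto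
  have "h (finsum A c (insert x F)) = h (c x \<oplus>\<^bsub>A\<^esub> finsum A c F)"
    using A.finsum_insert[OF insert(1,2) c(1,2)] by simp
  also have "\<dots> = h (c x) \<oplus>\<^bsub>B\<^esub> finsum B (h \<circ> c) F"
    using assms(4) c(2) fc ih by simp
  also have "\<dots> = finsum B (h \<circ> c) (insert x F)"
    using B.finsum_insert[OF insert(1,2) hc] by (simp add: comp_def)
  finally show ?case .
qed

lemma hom_finsum_supp:
  assumes "abelian_group A" "abelian_group B" "\<forall>x\<in>carrier A. h x \<in> carrier B"
    "\<forall>x\<in>carrier A. \<forall>y\<in>carrier A. h (x \<oplus>\<^bsub>A\<^esub> y) = h x \<oplus>\<^bsub>B\<^esub> h y"
    "finite {n. c n \<noteq> \<zero>\<^bsub>A\<^esub>}" "\<And>n. c n \<in> carrier A"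
  shows "finite {n. h (c n) \<noteq> \<zero>\<^bsub>B\<^esub>}"
    "h (finsum A c {n. c n \<noteq> \<zero>\<^bsub>A\<^esub>}) = finsum B (\<lambda>n. h (c n)) {n. h (c n) \<noteq> \<zero>\<^bsub>B\<^esub>}"
proof -
  have z: "h \<zero>\<^bsub>A\<^esub> = \<zero>\<^bsub>B\<^esub>" by (rule add_hom_zero[OF assms(1-4)])
  have sub: "{n. h (c n) \<noteq> \<zero>\<^bsub>B\<^esub>} \<subseteq> {n. c n \<noteq> \<zero>\<^bsub>A\<^esub>}" using z by auto
  then show "finite {n. h (c n) \<noteq> \<zero>\<^bsub>B\<^esub>}" using assms(5) finite_subset by blast
  have "h (finsum A c {n. c n \<noteq> \<zero>\<^bsub>A\<^esub>}) = finsum B (h \<circ> c) {n. c n \<noteq> \<zero>\<^bsub>A\<^esub>}"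
    by (rule hom_finsum[OF assms(1-5)]) (use assms(6) in auto)
  also have "\<dots> = finsum B (\<lambda>n. h (c n)) {n. h (c n) \<noteq> \<zero>\<^bsub>B\<^esub>}"
    using finsum_supp_eq[OF abelian_group.axioms(1)[OF assms(2)] assms(5) sub]
      assms(3,6) by (simp add: comp_def)
  finally show "h (finsum A c {n. c n \<noteq> \<zero>\<^bsub>A\<^esub>}) = finsum B (\<lambda>n. h (c n)) {n. h (c n) \<noteq> \<zero>\<^bsub>B\<^esub>}" .
qed

lemma hom_int_sum:
  assumes "abelian_group A" "abelian_group B" "\<forall>x\<in>carrier A. h x \<in> carrier B"
    "\<forall>x\<in>carrier A. \<forall>y\<in>carrier A. h (x \<oplus>\<^bsub>A\<^esub> y) = h x \<oplus>\<^bsub>B\<^esub> h y"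
    "\<And>n. S n \<subseteq> carrier A" "\<And>n. h ` S n \<subseteq> T n" "x \<in> int_sum A S"
  shows "h x \<in> int_sum B T"
proof -
  obtain c where c: "\<forall>n. c n \<in> S n" "finite {n. c n \<noteq> \<zero>\<^bsub>A\<^esub>}" "x = finsum A c {n. c n \<noteq> \<zero>\<^bsub>A\<^esub>}"
    using assms(7) unfolding int_sum_def by blast
  have cc: "\<And>n. c n \<in> carrier A" using c(1) assms(5) by blast
  note hs = hom_finsum_supp[OF assms(1-4) c(2) cc]
  have "\<forall>n. h (c n) \<in> T n" using c(1) assms(6) by blast
  moreover have "h x = finsum B (\<lambda>n. h (c n)) {n. h (c n) \<noteq> \<zero>\<^bsub>B\<^esub>}" using hs(2) c(3) by simp
  ultimately show ?thesis unfolding int_sum_def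
    by (intro CollectI exI[of _ "\<lambda>n. h (c n)"] conjI) (use hs(1) in simp_all)
qed

lemma dsum_subgroup: "is_dsum M Mg \<Longrightarrow> subgroup (Mg n) (add_monoid M)"
  unfolding is_dsum_def by (drule conjunct1) (erule spec)

lemma dsum_carrier: "is_dsum M Mg \<Longrightarrow> carrier M = int_sum M Mg"
  unfolding is_dsum_def by (drule conjunct2, drule conjunct1)

lemma dsum_unique: "is_dsum M Mg \<Longrightarrow> \<forall>c d. (\<forall>n. c n \<in> Mg n) \<and> (\<forall>n. d n \<in> Mg n)
          \<and> finite {n. c n \<noteq> \<zero>\<^bsub>M\<^esub>} \<and> finite {n. d n \<noteq> \<zero>\<^bsub>M\<^esub>}
          \<and> finsum M c {n. c n \<noteq> \<zero>\<^bsub>M\<^esub>} = finsum M d {n. d n \<noteq> \<zero>\<^bsub>M\<^esub>}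
          \<longrightarrow> c = d"
  unfolding is_dsum_def by (drule conjunct2, drule conjunct2)

definition cmp :: "('m, 'c) ring_scheme \<Rightarrow> (int \<Rightarrow> 'm set) \<Rightarrow> 'm \<Rightarrow> int \<Rightarrow> 'm" where
  "cmp M Mg x = (THE c. (\<forall>n. c n \<in> Mg n) \<and> finite {n. c n \<noteq> \<zero>\<^bsub>M\<^esub>}
      \<and> x = finsum M c {n. c n \<noteq> \<zero>\<^bsub>M\<^esub>})"

lemma cmp_eq:
  assumes "is_dsum M Mg" "\<forall>n. c n \<in> Mg n" "finite {n. c n \<noteq> \<zero>\<^bsub>M\<^esub>}"
    "x = finsum M c {n. c n \<noteq> \<zero>\<^bsub>M\<^esub>}"
  shows "cmp M Mg x = c"
  unfolding cmp_def
proof (rule the_equality)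
  show "(\<forall>n. c n \<in> Mg n) \<and> finite {n. c n \<noteq> \<zero>\<^bsub>M\<^esub>} \<and> x = finsum M c {n. c n \<noteq> \<zero>\<^bsub>M\<^esub>}"
    using assms by blast
  fix d assume d: "(\<forall>n. d n \<in> Mg n) \<and> finite {n. d n \<noteq> \<zero>\<^bsub>M\<^esub>} \<and> x = finsum M d {n. d n \<noteq> \<zero>\<^bsub>M\<^esub>}"
  have u: "\<forall>c d. (\<forall>n. c n \<in> Mg n) \<and> (\<forall>n. d n \<in> Mg n)
          \<and> finite {n. c n \<noteq> \<zero>\<^bsub>M\<^esub>} \<and> finite {n. d n \<noteq> \<zero>\<^bsub>M\<^esub>}
          \<and> finsum M c {n. c n \<noteq> \<zero>\<^bsub>M\<^esub>} = finsum M d {n. d n \<noteq> \<zero>\<^bsub>M\<^esub>}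
          \<longrightarrow> c = d" by (rule dsum_unique[OF assms(1)])
  have "finsum M d {n. d n \<noteq> \<zero>\<^bsub>M\<^esub>} = finsum M c {n. c n \<noteq> \<zero>\<^bsub>M\<^esub>}"
    using d assms(4) by simp
  then show "d = c" using u[rule_format, of d c] d assms(2,3) by blast
qed

lemma dsum_sub: "is_dsum M Mg \<Longrightarrow> Mg n \<subseteq> carrier M"
  using subgroup.subset[OF dsum_subgroup] by simp

lemma cmp_props:
  assumes "is_dsum M Mg" "x \<in> carrier M"
  shows "\<forall>n. cmp M Mg x n \<in> Mg n" "finite {n. cmp M Mg x n \<noteq> \<zero>\<^bsub>M\<^esub>}"
    "x = finsum M (cmp M Mg x) {n. cmp M Mg x n \<noteq> \<zero>\<^bsub>M\<^esub>}"
proof -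
  obtain c where c: "\<forall>n. c n \<in> Mg n" "finite {n. c n \<noteq> \<zero>\<^bsub>M\<^esub>}" "x = finsum M c {n. c n \<noteq> \<zero>\<^bsub>M\<^esub>}"
  proof -
    have "x \<in> int_sum M Mg" using dsum_carrier[OF assms(1)] assms(2) by simp
    then show ?thesis using that unfolding int_sum_def by blast
  qed
  have "cmp M Mg x = c" by (rule cmp_eq[OF assms(1) c])
  then show "\<forall>n. cmp M Mg x n \<in> Mg n" "finite {n. cmp M Mg x n \<noteq> \<zero>\<^bsub>M\<^esub>}"
    "x = finsum M (cmp M Mg x) {n. cmp M Mg x n \<noteq> \<zero>\<^bsub>M\<^esub>}" using c by simp_all
qed

lemma cmp_carrier: assumes "is_dsum M Mg" "x \<in> carrier M" shows "cmp M Mg x n \<in> carrier M"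
  using cmp_props(1)[OF assms] dsum_sub[OF assms(1), of n] by blast

lemma cmp_zero:
  assumes "abelian_group M" "is_dsum M Mg"
  shows "cmp M Mg \<zero>\<^bsub>M\<^esub> = (\<lambda>n. \<zero>\<^bsub>M\<^esub>)"
proof -
  interpret abelian_group M by fact
  have "\<zero>\<^bsub>M\<^esub> \<in> Mg n" for n using subgroup.one_closed[OF dsum_subgroup[OF assms(2)]]
    by simp
  moreover have "{n. (\<zero>\<^bsub>M\<^esub>::'a) \<noteq> \<zero>\<^bsub>M\<^esub>} = {}" by simp
  ultimately show ?thesis by (intro cmp_eq[OF assms(2)]) (simp_all add: finsum_empty)
qed

lemma cmp_hom:
  assumes "abelian_group A" "abelian_group B" "\<forall>x\<in>carrier A. h x \<in> carrier B"
    "\<forall>x\<in>carrier A. \<forall>y\<in>carrier A. h (x \<oplus>\<^bsub>A\<^esub> y) = h x \<oplus>\<^bsub>B\<^esub> h y"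
    "is_dsum A Ag" "is_dsum B Bg" "\<And>n. h ` Ag n \<subseteq> Bg n" "x \<in> carrier A"
  shows "cmp B Bg (h x) = (\<lambda>n. h (cmp A Ag x n))"
proof -
  note cp = cmp_props[OF assms(5,8)]
  note hs = hom_finsum_supp[OF assms(1-4) cp(2) cmp_carrier[OF assms(5,8)]]
  show ?thesis
    apply (rule cmp_eq[OF assms(6)])
    using cp(1) assms(7) apply blast
     apply (rule hs(1))
    using hs(2) cp(3) by simp
qed

lemma finsum_in_subgroup:
  assumes "abelian_group M" "subgroup H (add_monoid M)" "finite F" "\<forall>n\<in>F. c n \<in> H"
  shows "finsum M c F \<in> H"
  using assms(3,4)
proof (induction F rule: finite_induct)
  case empty
  interpret abelian_group M by fact
  show ?case using subgroup.one_closed[OF assms(2)] by simp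
next
  case (insert x F)
  interpret abelian_group M by fact
  have sub: "H \<subseteq> carrier M" using subgroup.subset[OF assms(2)] by simp
  have cH: "c x \<in> H" "\<forall>n\<in>F. c n \<in> H" using insert.prems by blast+
  have c: "c \<in> F \<rightarrow> carrier M" "c x \<in> carrier M" using cH sub by blast+
  have fH: "finsum M c F \<in> H" using insert.IH cH(2) by blast
  have "finsum M c (insert x F) = c x \<oplus>\<^bsub>M\<^esub> finsum M c F"
    by (rule finsum_insert[OF insert(1,2) c(1,2)])
  then show ?case using subgroup.m_closed[OF assms(2) cH(1) fH] by simp
qed

lemma sg_char:
  assumes "abelian_group M" "is_dsum M Mg" "subgroup N (add_monoid M)"
  shows "(N = int_sum M (\<lambda>n. N \<inter> Mg n)) \<longleftrightarrow> (\<forall>x\<in>N. \<forall>n. cmp M Mg x n \<in> N)"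
proof
  have sub: "N \<subseteq> carrier M" using subgroup.subset[OF assms(3)] by simp
  assume eq: "N = int_sum M (\<lambda>n. N \<inter> Mg n)"
  show "\<forall>x\<in>N. \<forall>n. cmp M Mg x n \<in> N"
  proof (intro ballI allI)
    fix x n assume "x \<in> N"
    then obtain c where c: "\<forall>n. c n \<in> N \<inter> Mg n" "finite {n. c n \<noteq> \<zero>\<^bsub>M\<^esub>}"
      "x = finsum M c {n. c n \<noteq> \<zero>\<^bsub>M\<^esub>}"
      using eq unfolding int_sum_def by blast
    have "cmp M Mg x = c" by (rule cmp_eq[OF assms(2)]) (use c in auto)
    then show "cmp M Mg x n \<in> N" using c by auto
  qed
next
  have sub: "N \<subseteq> carrier M" using subgroup.subset[OF assms(3)] by simp
  assume H: "\<forall>x\<in>N. \<forall>n. cmp M Mg x n \<in> N"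
  show "N = int_sum M (\<lambda>n. N \<inter> Mg n)"
  proof
    show "N \<subseteq> int_sum M (\<lambda>n. N \<inter> Mg n)"
    proof
      fix x assume x: "x \<in> N"
      note cp = cmp_props[OF assms(2), of x]
      have "\<forall>n. cmp M Mg x n \<in> N \<inter> Mg n" using cp(1) x sub H by blast
      then show "x \<in> int_sum M (\<lambda>n. N \<inter> Mg n)" unfolding int_sum_def
        using cp(2,3) x sub by blast
    qed
    show "int_sum M (\<lambda>n. N \<inter> Mg n) \<subseteq> N"
    proof
      fix x assume "x \<in> int_sum M (\<lambda>n. N \<inter> Mg n)"
      then obtain c where c: "\<forall>n. c n \<in> N \<inter> Mg n" "finite {n. c n \<noteq> \<zero>\<^bsub>M\<^esub>}"
        "x = finsum M c {n. c n \<noteq> \<zero>\<^bsub>M\<^esub>}" unfolding int_sum_def by blast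
      show "x \<in> N" unfolding c(3)
        by (rule finsum_in_subgroup[OF assms(1,3) c(2)]) (use c(1) in blast)
    qed
  qed
qed

lemma lmod_ring: "lmodule R M \<Longrightarrow> ring R" by (simp add: lmodule_def)
lemma lmod_ab: "lmodule R M \<Longrightarrow> abelian_group M" by (simp add: lmodule_def)
lemma lmod_closed: "lmodule R M \<Longrightarrow> a \<in> carrier R \<Longrightarrow> x \<in> carrier M \<Longrightarrow> a \<odot>\<^bsub>M\<^esub> x \<in> carrier M"
  by (simp add: lmodule_def module_axioms_def)
lemma lmod_ldistr: "lmodule R M \<Longrightarrow> a \<in> carrier R \<Longrightarrow> b \<in> carrier R \<Longrightarrow> x \<in> carrier M \<Longrightarrow>
    (a \<oplus>\<^bsub>R\<^esub> b) \<odot>\<^bsub>M\<^esub> x = a \<odot>\<^bsub>M\<^esub> x \<oplus>\<^bsub>M\<^esub> b \<odot>\<^bsub>M\<^esub> x"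
  by (simp add: lmodule_def module_axioms_def)
lemma lmod_rdistr: "lmodule R M \<Longrightarrow> a \<in> carrier R \<Longrightarrow> x \<in> carrier M \<Longrightarrow> y \<in> carrier M \<Longrightarrow>
    a \<odot>\<^bsub>M\<^esub> (x \<oplus>\<^bsub>M\<^esub> y) = a \<odot>\<^bsub>M\<^esub> x \<oplus>\<^bsub>M\<^esub> a \<odot>\<^bsub>M\<^esub> y"
  by (simp add: lmodule_def module_axioms_def)
lemma lmod_assoc: "lmodule R M \<Longrightarrow> a \<in> carrier R \<Longrightarrow> b \<in> carrier R \<Longrightarrow> x \<in> carrier M \<Longrightarrow>
    (a \<otimes>\<^bsub>R\<^esub> b) \<odot>\<^bsub>M\<^esub> x = a \<odot>\<^bsub>M\<^esub> (b \<odot>\<^bsub>M\<^esub> x)"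
  by (simp add: lmodule_def module_axioms_def)
lemma lmod_one: "lmodule R M \<Longrightarrow> x \<in> carrier M \<Longrightarrow> \<one>\<^bsub>R\<^esub> \<odot>\<^bsub>M\<^esub> x = x"
  by (simp add: lmodule_def module_axioms_def)

lemma lmod_zero_r:
  assumes "lmodule R M" "a \<in> carrier R"
  shows "a \<odot>\<^bsub>M\<^esub> \<zero>\<^bsub>M\<^esub> = \<zero>\<^bsub>M\<^esub>"
proof -
  interpret abelian_group M using lmod_ab[OF assms(1)] .
  have c: "a \<odot>\<^bsub>M\<^esub> \<zero>\<^bsub>M\<^esub> \<in> carrier M" using lmod_closed[OF assms] by simp
  have "a \<odot>\<^bsub>M\<^esub> \<zero>\<^bsub>M\<^esub> \<oplus>\<^bsub>M\<^esub> a \<odot>\<^bsub>M\<^esub> \<zero>\<^bsub>M\<^esub> = a \<odot>\<^bsub>M\<^esub> \<zero>\<^bsub>M\<^esub>"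
    using lmod_rdistr[OF assms, of "\<zero>\<^bsub>M\<^esub>" "\<zero>\<^bsub>M\<^esub>"] by simp
  then show ?thesis using c add.l_cancel_one by blast
qed

lemma lmod_zero_l:
  assumes "lmodule R M" "x \<in> carrier M"
  shows "\<zero>\<^bsub>R\<^esub> \<odot>\<^bsub>M\<^esub> x = \<zero>\<^bsub>M\<^esub>"
proof -
  interpret abelian_group M using lmod_ab[OF assms(1)] .
  interpret R: ring R using lmod_ring[OF assms(1)] .
  have c: "\<zero>\<^bsub>R\<^esub> \<odot>\<^bsub>M\<^esub> x \<in> carrier M" using lmod_closed[OF assms(1) R.zero_closed assms(2)] .
  have "\<zero>\<^bsub>R\<^esub> \<odot>\<^bsub>M\<^esub> x \<oplus>\<^bsub>M\<^esub> \<zero>\<^bsub>R\<^esub> \<odot>\<^bsub>M\<^esub> x = \<zero>\<^bsub>R\<^esub> \<odot>\<^bsub>M\<^esub> x"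
    using lmod_ldistr[OF assms(1) R.zero_closed R.zero_closed assms(2)] by simp
  then show ?thesis using c add.l_cancel_one by blast
qed

lemma subgroup_addI:
  assumes "abelian_group M" "H \<subseteq> carrier M" "\<zero>\<^bsub>M\<^esub> \<in> H" "\<And>x. x \<in> H \<Longrightarrow> \<ominus>\<^bsub>M\<^esub> x \<in> H"
    "\<And>x y. x \<in> H \<Longrightarrow> y \<in> H \<Longrightarrow> x \<oplus>\<^bsub>M\<^esub> y \<in> H"
  shows "subgroup H (add_monoid M)"
proof -
  interpret abelian_group M by fact
  show ?thesis by (rule add.subgroupI) (use assms in auto)
qed

lemma subgroup_add_neg:
  assumes "abelian_group M" "subgroup H (add_monoid M)" "x \<in> H"
  shows "\<ominus>\<^bsub>M\<^esub> x \<in> H"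
  using subgroup.m_inv_closed[OF assms(2,3)] by (simp add: a_inv_def)

lemma subgroup_add_sub:
  assumes "subgroup H (add_monoid M)" shows "H \<subseteq> carrier M"
  using subgroup.subset[OF assms] by simp

lemma subgroup_add_closed:
  assumes "subgroup H (add_monoid M)" "x \<in> H" "y \<in> H" shows "x \<oplus>\<^bsub>M\<^esub> y \<in> H"
  using subgroup.m_closed[OF assms] by simp

lemma subgroup_add_zero:
  assumes "subgroup H (add_monoid M)" shows "\<zero>\<^bsub>M\<^esub> \<in> H"
  using subgroup.one_closed[OF assms] by simp

lemma lsubmodule_Inter:
  assumes "lmodule R M" "\<And>N. N \<in> F \<Longrightarrow> lsubmodule R M N" "F \<noteq> {}"
  shows "lsubmodule R M (\<Inter>F)"
proof -
  interpret abelian_group M using lmod_ab[OF assms(1)] .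
  have "subgroup (\<Inter>F) (add_monoid M)"
    by (rule add.subgroups_Inter) (use assms(2,3) in \<open>auto simp: lsubmodule_def\<close>)
  moreover have "\<Inter>F \<subseteq> carrier M"
  proof -
    obtain N where N: "N \<in> F" using assms(3) by blast
    then have "N \<subseteq> carrier M" using assms(2) by (simp add: lsubmodule_def)
    then show ?thesis using N by blast
  qed
  moreover have "\<forall>a\<in>carrier R. \<forall>x\<in>\<Inter>F. a \<odot>\<^bsub>M\<^esub> x \<in> \<Inter>F"
    using assms(2) unfolding lsubmodule_def by blast
  ultimately show ?thesis unfolding lsubmodule_def by blast
qed

lemma sg_submodule_Inter:
  assumes "lmodule R M" "is_dsum M Mg" "\<And>N. N \<in> F \<Longrightarrow> sg_submodule R M Mg N" "F \<noteq> {}"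
  shows "sg_submodule R M Mg (\<Inter>F)"
proof -
  have ls: "lsubmodule R M (\<Inter>F)"
    by (rule lsubmodule_Inter[OF assms(1)]) (use assms(3,4) in \<open>auto simp: sg_submodule_def\<close>)
  have sg: "subgroup (\<Inter>F) (add_monoid M)" using ls by (simp add: lsubmodule_def)
  have "\<forall>x\<in>N. \<forall>n. cmp M Mg x n \<in> N" if "N \<in> F" for N
  proof -
    have s: "sg_submodule R M Mg N" using assms(3) that .
    then have a: "subgroup N (add_monoid M)" and b: "N = int_sum M (\<lambda>n. N \<inter> Mg n)"
      by (simp_all add: sg_submodule_def lsubmodule_def)
    show ?thesis using sg_char[OF lmod_ab[OF assms(1)] assms(2) a] b by (rule iffD1)
  qed
  then have "\<forall>x\<in>\<Inter>F. \<forall>n. cmp M Mg x n \<in> \<Inter>F" by blast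
  then have "\<Inter>F = int_sum M (\<lambda>n. \<Inter>F \<inter> Mg n)" by (rule iffD2[OF sg_char[OF lmod_ab[OF assms(1)] assms(2) sg]])
  then show ?thesis using ls by (simp add: sg_submodule_def)
qed

lemma sg_submodule_carrier:
  assumes "lmodule R M" "is_dsum M Mg"
  shows "sg_submodule R M Mg (carrier M)"
proof -
  interpret abelian_group M using lmod_ab[OF assms(1)] .
  have sg: "subgroup (carrier M) (add_monoid M)"
    using add.subgroup_self by simp
  have "\<forall>x\<in>carrier M. \<forall>n. cmp M Mg x n \<in> carrier M" using cmp_carrier[OF assms(2)] by blast
  then have "carrier M = int_sum M (\<lambda>n. carrier M \<inter> Mg n)" by (rule iffD2[OF sg_char[OF lmod_ab[OF assms(1)] assms(2) sg]])
  moreover have "lsubmodule R M (carrier M)" unfolding lsubmodule_def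
    using sg lmod_closed[OF assms(1)] by blast
  ultimately show ?thesis by (simp add: sg_submodule_def)
qed

lemma sg_submodule_zero:
  assumes "lmodule R M" "is_dsum M Mg"
  shows "sg_submodule R M Mg {\<zero>\<^bsub>M\<^esub>}"
proof -
  interpret abelian_group M using lmod_ab[OF assms(1)] .
  have sg: "subgroup {\<zero>\<^bsub>M\<^esub>} (add_monoid M)"
    by (rule subgroup_addI) (use lmod_ab[OF assms(1)] in auto)
  have "\<forall>x\<in>{\<zero>\<^bsub>M\<^esub>}. \<forall>n. cmp M Mg x n \<in> {\<zero>\<^bsub>M\<^esub>}" using cmp_zero[OF lmod_ab[OF assms(1)] assms(2)] by simp
  then have "{\<zero>\<^bsub>M\<^esub>} = int_sum M (\<lambda>n. {\<zero>\<^bsub>M\<^esub>} \<inter> Mg n)" by (rule iffD2[OF sg_char[OF lmod_ab[OF assms(1)] assms(2) sg]])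
  moreover have "lsubmodule R M {\<zero>\<^bsub>M\<^esub>}" unfolding lsubmodule_def
    using sg lmod_zero_r[OF assms(1)] by simp
  ultimately show ?thesis by (simp add: sg_submodule_def)
qed

lemma sg_submodule_vimage:
  assumes "lmodule R M" "is_dsum M Mg" "lmodule R M'" "is_dsum M' Mg'"
    "\<beta> \<in> lmod_hom R M M'" "\<And>n. \<beta> ` Mg n \<subseteq> Mg' n" "sg_submodule R M' Mg' P"
  shows "sg_submodule R M Mg {x \<in> carrier M. \<beta> x \<in> P}"
proof -
  interpret M: abelian_group M using lmod_ab[OF assms(1)] .
  interpret M': abelian_group M' using lmod_ab[OF assms(3)] .
  have bc: "\<forall>x\<in>carrier M. \<beta> x \<in> carrier M'" and ba: "\<forall>x\<in>carrier M. \<forall>y\<in>carrier M. \<beta> (x \<oplus>\<^bsub>M\<^esub> y) = \<beta> x \<oplus>\<^bsub>M'\<^esub> \<beta> y"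
    and bs: "\<forall>a\<in>carrier R. \<forall>x\<in>carrier M. \<beta> (a \<odot>\<^bsub>M\<^esub> x) = a \<odot>\<^bsub>M'\<^esub> \<beta> x"
    using assms(5) unfolding lmod_hom_def by auto
  have z: "\<beta> \<zero>\<^bsub>M\<^esub> = \<zero>\<^bsub>M'\<^esub>" by (rule add_hom_zero[OF lmod_ab[OF assms(1)] lmod_ab[OF assms(3)] bc ba])
  have Psg: "subgroup P (add_monoid M')" and Psm: "\<forall>a\<in>carrier R. \<forall>x\<in>P. a \<odot>\<^bsub>M'\<^esub> x \<in> P"
    and Peq: "P = int_sum M' (\<lambda>n. P \<inter> Mg' n)"
    using assms(7) by (simp_all add: sg_submodule_def lsubmodule_def)
  have neg: "\<beta> (\<ominus>\<^bsub>M\<^esub> x) = \<ominus>\<^bsub>M'\<^esub> \<beta> x" if "x \<in> carrier M" for x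
  proof -
    have "\<beta> (\<ominus>\<^bsub>M\<^esub> x) \<oplus>\<^bsub>M'\<^esub> \<beta> x = \<zero>\<^bsub>M'\<^esub>" using ba that z by (metis M.a_inv_closed M.l_neg)
    then show ?thesis using that bc by (metis M'.minus_equality M.a_inv_closed)
  qed
  let ?Q = "{x \<in> carrier M. \<beta> x \<in> P}"
  have Qsg: "subgroup ?Q (add_monoid M)"
  proof (rule subgroup_addI[OF lmod_ab[OF assms(1)]])
    show "?Q \<subseteq> carrier M" by blast
    show "\<zero>\<^bsub>M\<^esub> \<in> ?Q" using z subgroup_add_zero[OF Psg] by simp
    show "\<ominus>\<^bsub>M\<^esub> x \<in> ?Q" if "x \<in> ?Q" for x
      using that neg subgroup_add_neg[OF lmod_ab[OF assms(3)] Psg] by simp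
    show "x \<oplus>\<^bsub>M\<^esub> y \<in> ?Q" if "x \<in> ?Q" "y \<in> ?Q" for x y
      using that ba subgroup_add_closed[OF Psg] by simp
  qed
  have "lsubmodule R M ?Q" unfolding lsubmodule_def
    using Qsg bs Psm lmod_closed[OF assms(1)] by simp
  moreover have "\<forall>x\<in>?Q. \<forall>n. cmp M Mg x n \<in> ?Q"
  proof (intro ballI allI)
    fix x n assume x: "x \<in> ?Q"
    have "cmp M' Mg' (\<beta> x) = (\<lambda>n. \<beta> (cmp M Mg x n))"
      by (rule cmp_hom[OF lmod_ab[OF assms(1)] lmod_ab[OF assms(3)] bc ba assms(2,4,6)]) (use x in blast)
    moreover have "\<forall>y\<in>P. \<forall>n. cmp M' Mg' y n \<in> P"
      using sg_char[OF lmod_ab[OF assms(3)] assms(4) Psg] Peq by (rule iffD1)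
    then have "cmp M' Mg' (\<beta> x) n \<in> P" using x by blast
    ultimately have "\<beta> (cmp M Mg x n) \<in> P" by simp
    then show "cmp M Mg x n \<in> ?Q" using cmp_carrier[OF assms(2)] x by blast
  qed
  then have "?Q = int_sum M (\<lambda>n. ?Q \<inter> Mg n)" by (rule iffD2[OF sg_char[OF lmod_ab[OF assms(1)] assms(2) Qsg]])
  ultimately show ?thesis by (simp add: sg_submodule_def)
qed

lemma coset_eqI:
  assumes "abelian_subgroup H M" "x \<in> carrier M" "h \<in> H"
  shows "H +>\<^bsub>M\<^esub> (h \<oplus>\<^bsub>M\<^esub> x) = H +>\<^bsub>M\<^esub> x"
proof -
  interpret abelian_subgroup H M by fact
  have "h \<oplus>\<^bsub>M\<^esub> x \<in> H +>\<^bsub>M\<^esub> x" using a_rcosI[OF assms(3) a_subset assms(2)] .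
  then show ?thesis using a_repr_independence'[OF _ assms(2)] by simp
qed

lemma coset_eqI':
  assumes "abelian_subgroup H M" "x \<in> carrier M" "y \<in> carrier M" "x \<oplus>\<^bsub>M\<^esub> \<ominus>\<^bsub>M\<^esub> y \<in> H"
  shows "H +>\<^bsub>M\<^esub> x = H +>\<^bsub>M\<^esub> y"
proof -
  interpret abelian_subgroup H M by fact
  have "x \<in> H +>\<^bsub>M\<^esub> y" using a_rcos_module_rev[OF assms(3,2,4)] .
  then show ?thesis using a_repr_independence'[OF _ assms(3)] by simp
qed

lemma coset_image:
  assumes "abelian_subgroup H M" "x \<in> carrier M" "\<And>h. h \<in> H \<Longrightarrow> f (h \<oplus>\<^bsub>M\<^esub> x) = f x"
  shows "f ` (H +>\<^bsub>M\<^esub> x) = {f x}"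
proof -
  interpret abelian_subgroup H M by fact
  have eq: "H +>\<^bsub>M\<^esub> x = (\<Union>h\<in>H. {h \<oplus>\<^bsub>M\<^esub> x})" using a_r_coset_def'[of M H x] by simp
  have z: "\<zero>\<^bsub>M\<^esub> \<in> H" by simp
  have fz: "f (\<zero>\<^bsub>M\<^esub> \<oplus>\<^bsub>M\<^esub> x) = f x" using assms(3)[OF z] .
  have zin: "\<zero>\<^bsub>M\<^esub> \<oplus>\<^bsub>M\<^esub> x \<in> H +>\<^bsub>M\<^esub> x" unfolding eq using z by blast
  show ?thesis
  proof
    show "f ` (H +>\<^bsub>M\<^esub> x) \<subseteq> {f x}" unfolding eq using assms(3) by blast
    show "{f x} \<subseteq> f ` (H +>\<^bsub>M\<^esub> x)" using zin fz by (metis empty_subsetI image_eqI insert_subset)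
  qed
qed

lemma the_elem_coset_image:
  assumes "abelian_subgroup H M" "x \<in> carrier M" "\<And>h. h \<in> H \<Longrightarrow> f (h \<oplus>\<^bsub>M\<^esub> x) = f x"
  shows "the_elem (f ` (H +>\<^bsub>M\<^esub> x)) = f x"
  using coset_image[OF assms] by simp

lemma rcosets_repr:
  assumes "X \<in> a_rcosets\<^bsub>M\<^esub> H"
  obtains x where "x \<in> carrier M" "X = H +>\<^bsub>M\<^esub> x"
proof -
  from assms have "\<exists>x\<in>carrier M. X = H +>\<^bsub>M\<^esub> x" unfolding A_RCOSETS_def'[of M H] by blast
  then show thesis using that by blast
qed

locale sgset =
  fixes R :: "'a ring" and Rg :: "int \<Rightarrow> 'a set" and J :: "'a set"
  assumes sgR: "sg_ring R Rg" and sgJ: "sg_ideal R Rg J"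
begin

lemma ringR: "ring R" using sgR by (simp add: sg_ring_def)
lemma idealJ: "ideal J R" using sgJ by (simp add: sg_ideal_def)
lemma dsumR: "is_dsum R Rg" using sgR by (simp add: sg_ring_def)

interpretation R: ring R by (rule ringR)
interpretation J: ideal J R by (rule idealJ)

lemma quot_ring: "ring (R Quot J)" by (rule J.quotient_is_ring)

lemma J_absub: "abelian_subgroup J R"
  using abelian_subgroupI3[OF J.additive_subgroup_axioms R.abelian_group_axioms] .

lemma quot_in: "a \<in> carrier R \<Longrightarrow> J +>\<^bsub>R\<^esub> a \<in> carrier (R Quot J)"
  using ring_hom_closed[OF J.rcos_ring_hom] by simp

lemma quot_repr:
  assumes "A \<in> carrier (R Quot J)"
  obtains a where "a \<in> carrier R" "A = J +>\<^bsub>R\<^esub> a"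
proof -
  have "A \<in> a_rcosets\<^bsub>R\<^esub> J" using assms by (simp add: FactRing_def)
  then show thesis by (rule rcosets_repr[OF _ that])
qed

lemma quot_add: "a \<in> carrier R \<Longrightarrow> b \<in> carrier R \<Longrightarrow>
    (J +>\<^bsub>R\<^esub> a) \<oplus>\<^bsub>R Quot J\<^esub> (J +>\<^bsub>R\<^esub> b) = J +>\<^bsub>R\<^esub> (a \<oplus>\<^bsub>R\<^esub> b)"
  using ring_hom_add[OF J.rcos_ring_hom] by simp

lemma quot_mult: "a \<in> carrier R \<Longrightarrow> b \<in> carrier R \<Longrightarrow>
    (J +>\<^bsub>R\<^esub> a) \<otimes>\<^bsub>R Quot J\<^esub> (J +>\<^bsub>R\<^esub> b) = J +>\<^bsub>R\<^esub> (a \<otimes>\<^bsub>R\<^esub> b)"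
  using ring_hom_mult[OF J.rcos_ring_hom] by simp

lemma quot_one: "\<one>\<^bsub>R Quot J\<^esub> = J +>\<^bsub>R\<^esub> \<one>\<^bsub>R\<^esub>"
  using ring_hom_one[OF J.rcos_ring_hom] by simp

lemma quot_zero: "\<zero>\<^bsub>R Quot J\<^esub> = J" by (simp add: FactRing_def)

lemma quot_J: "j \<in> J \<Longrightarrow> J +>\<^bsub>R\<^esub> j = J"
  using abelian_subgroup.a_rcos_const[OF J_absub] by blast

lemma grading_carrier: "Rg m \<subseteq> carrier R" using dsum_sub[OF dsumR] .

lemma JM_sub: assumes "lmodule R M" shows "ideal_times J M \<subseteq> carrier M"
proof
  fix z assume "z \<in> ideal_times J M"
  then obtain a x where ax: "a \<in> J" "x \<in> carrier M" "z = a \<odot>\<^bsub>M\<^esub> x" unfolding ideal_times_def by blast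
  have "a \<in> carrier R" using ax(1) J.a_subset by blast
  then show "z \<in> carrier M" using lmod_closed[OF assms _ ax(2)] ax(3) by simp
qed

lemma L_sg:
  assumes "lmodule R M" "is_dsum M Mg"
  shows "sg_submodule R M Mg (pull_sub R J M Mg)" "ideal_times J M \<subseteq> pull_sub R J M Mg"
    "\<And>P. sg_submodule R M Mg P \<Longrightarrow> ideal_times J M \<subseteq> P \<Longrightarrow> pull_sub R J M Mg \<subseteq> P"
proof -
  let ?F = "{N'. sg_submodule R M Mg N' \<and> ideal_times J M \<subseteq> N'}"
  have eq: "pull_sub R J M Mg = \<Inter>?F" by (simp add: pull_sub_def sg_gen_def)
  have "carrier M \<in> ?F" using sg_submodule_carrier[OF assms] JM_sub[OF assms(1)] by blast
  then have ne: "?F \<noteq> {}" by blast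
  show "sg_submodule R M Mg (pull_sub R J M Mg)" unfolding eq
    by (rule sg_submodule_Inter[OF assms _ ne]) blast
  show "ideal_times J M \<subseteq> pull_sub R J M Mg" unfolding eq by blast
  show "\<And>P. sg_submodule R M Mg P \<Longrightarrow> ideal_times J M \<subseteq> P \<Longrightarrow> pull_sub R J M Mg \<subseteq> P"
    unfolding eq by blast
qed

lemma L_subgroup:
  assumes "lmodule R M" "is_dsum M Mg"
  shows "subgroup (pull_sub R J M Mg) (add_monoid M)"
  using L_sg(1)[OF assms] by (simp add: sg_submodule_def lsubmodule_def)

lemma L_absub:
  assumes "lmodule R M" "is_dsum M Mg"
  shows "abelian_subgroup (pull_sub R J M Mg) M"
  by (rule abelian_subgroupI3) (use L_subgroup[OF assms] lmod_ab[OF assms(1)] in \<open>simp_all add: additive_subgroup_def\<close>)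

lemma L_carrier:
  assumes "lmodule R M" "is_dsum M Mg"
  shows "pull_sub R J M Mg \<subseteq> carrier M"
  using subgroup_add_sub[OF L_subgroup[OF assms]] .

lemma L_smult:
  assumes "lmodule R M" "is_dsum M Mg" "a \<in> carrier R" "l \<in> pull_sub R J M Mg"
  shows "a \<odot>\<^bsub>M\<^esub> l \<in> pull_sub R J M Mg"
  using L_sg(1)[OF assms(1,2)] assms(3,4) by (simp add: sg_submodule_def lsubmodule_def)

lemma L_JM:
  assumes "lmodule R M" "is_dsum M Mg" "j \<in> J" "x \<in> carrier M"
  shows "j \<odot>\<^bsub>M\<^esub> x \<in> pull_sub R J M Mg"
  using L_sg(2)[OF assms(1,2)] assms(3,4) unfolding ideal_times_def by blast

lemma pull_simps:
  "carrier (pull R J M Mg) = a_rcosets\<^bsub>M\<^esub> (pull_sub R J M Mg)"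
  "add (pull R J M Mg) = set_add M"
  "zero (pull R J M Mg) = pull_sub R J M Mg"
  "smult (pull R J M Mg) = (\<lambda>A X. \<Union>a\<in>A. \<Union>x\<in>X. pull_sub R J M Mg +>\<^bsub>M\<^esub> smult M a x)"
  by (simp_all add: pull_def Let_def)

lemma pull_in:
  assumes "lmodule R M" "is_dsum M Mg" "x \<in> carrier M"
  shows "pull_sub R J M Mg +>\<^bsub>M\<^esub> x \<in> carrier (pull R J M Mg)"
  using abelian_group.a_rcosetsI[OF lmod_ab[OF assms(1)] L_carrier[OF assms(1,2)] assms(3)]
  by (simp add: pull_simps)

lemma pull_repr:
  assumes "X \<in> carrier (pull R J M Mg)"
  obtains x where "x \<in> carrier M" "X = pull_sub R J M Mg +>\<^bsub>M\<^esub> x"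
proof -
  have "X \<in> a_rcosets\<^bsub>M\<^esub> (pull_sub R J M Mg)" using assms by (simp add: pull_simps)
  then show thesis by (rule rcosets_repr[OF _ that])
qed

lemma pull_add:
  assumes "lmodule R M" "is_dsum M Mg" "x \<in> carrier M" "y \<in> carrier M"
  shows "(pull_sub R J M Mg +>\<^bsub>M\<^esub> x) \<oplus>\<^bsub>pull R J M Mg\<^esub> (pull_sub R J M Mg +>\<^bsub>M\<^esub> y)
     = pull_sub R J M Mg +>\<^bsub>M\<^esub> (x \<oplus>\<^bsub>M\<^esub> y)"
  using abelian_subgroup.a_rcos_sum[OF L_absub[OF assms(1,2)] assms(3,4)] by (simp add: pull_simps)

lemma pull_zero:
  assumes "lmodule R M" "is_dsum M Mg"
  shows "\<zero>\<^bsub>pull R J M Mg\<^esub> = pull_sub R J M Mg +>\<^bsub>M\<^esub> \<zero>\<^bsub>M\<^esub>"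
  using abelian_group.a_coset_add_zero[OF lmod_ab[OF assms(1)] L_carrier[OF assms]]
  by (simp add: pull_simps)

lemma pull_smult:
  assumes "lmodule R M" "is_dsum M Mg" "a \<in> carrier R" "x \<in> carrier M"
  shows "(J +>\<^bsub>R\<^esub> a) \<odot>\<^bsub>pull R J M Mg\<^esub> (pull_sub R J M Mg +>\<^bsub>M\<^esub> x)
     = pull_sub R J M Mg +>\<^bsub>M\<^esub> (a \<odot>\<^bsub>M\<^esub> x)"
proof -
  let ?L = "pull_sub R J M Mg"
  interpret M: abelian_group M using lmod_ab[OF assms(1)] .
  have Lab: "abelian_subgroup ?L M" by (rule L_absub[OF assms(1,2)])
  have Lc: "?L \<subseteq> carrier M" by (rule L_carrier[OF assms(1,2)])
  have key: "?L +>\<^bsub>M\<^esub> (a' \<odot>\<^bsub>M\<^esub> y) = ?L +>\<^bsub>M\<^esub> (a \<odot>\<^bsub>M\<^esub> x)"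
    if a': "a' \<in> J +>\<^bsub>R\<^esub> a" and y: "y \<in> ?L +>\<^bsub>M\<^esub> x" for a' y
  proof -
    obtain j where j: "j \<in> J" "a' = j \<oplus>\<^bsub>R\<^esub> a" using a' unfolding a_r_coset_def'[of R J a] by blast
    obtain l where l: "l \<in> ?L" "y = l \<oplus>\<^bsub>M\<^esub> x" using y unfolding a_r_coset_def'[of M ?L x] by blast
    have jc: "j \<in> carrier R" using j(1) J.a_subset by blast
    have lc: "l \<in> carrier M" using l(1) Lc by blast
    have yc: "y \<in> carrier M" using l lc assms(4) by simp
    have "a' \<odot>\<^bsub>M\<^esub> y = j \<odot>\<^bsub>M\<^esub> y \<oplus>\<^bsub>M\<^esub> a \<odot>\<^bsub>M\<^esub> y"
      using lmod_ldistr[OF assms(1) jc assms(3) yc] j(2) by simp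
    also have "a \<odot>\<^bsub>M\<^esub> y = a \<odot>\<^bsub>M\<^esub> l \<oplus>\<^bsub>M\<^esub> a \<odot>\<^bsub>M\<^esub> x"
      using lmod_rdistr[OF assms(1,3) lc assms(4)] l(2) by simp
    finally have e: "a' \<odot>\<^bsub>M\<^esub> y = (j \<odot>\<^bsub>M\<^esub> y \<oplus>\<^bsub>M\<^esub> a \<odot>\<^bsub>M\<^esub> l) \<oplus>\<^bsub>M\<^esub> a \<odot>\<^bsub>M\<^esub> x"
      using lmod_closed[OF assms(1)] jc yc lc assms(3,4) by (simp add: M.a_assoc)
    have h: "j \<odot>\<^bsub>M\<^esub> y \<oplus>\<^bsub>M\<^esub> a \<odot>\<^bsub>M\<^esub> l \<in> ?L"
      using subgroup_add_closed[OF L_subgroup[OF assms(1,2)] L_JM[OF assms(1,2) j(1) yc]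
          L_smult[OF assms(1,2,3) l(1)]] .
    show ?thesis unfolding e
      by (rule coset_eqI[OF Lab lmod_closed[OF assms(1,3,4)] h])
  qed
  have "a \<in> J +>\<^bsub>R\<^esub> a" using abelian_subgroup.a_rcos_self[OF J_absub assms(3)] .
  moreover have "x \<in> ?L +>\<^bsub>M\<^esub> x" using abelian_subgroup.a_rcos_self[OF Lab assms(4)] .
  ultimately have ne: "J +>\<^bsub>R\<^esub> a \<noteq> {}" "?L +>\<^bsub>M\<^esub> x \<noteq> {}" by blast+
  have "(\<Union>a'\<in>J +>\<^bsub>R\<^esub> a. \<Union>y\<in>?L +>\<^bsub>M\<^esub> x. ?L +>\<^bsub>M\<^esub> (a' \<odot>\<^bsub>M\<^esub> y))
      = (\<Union>a'\<in>J +>\<^bsub>R\<^esub> a. \<Union>y\<in>?L +>\<^bsub>M\<^esub> x. ?L +>\<^bsub>M\<^esub> (a \<odot>\<^bsub>M\<^esub> x))"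
    using key by (simp cong: SUP_cong)
  also have "\<dots> = ?L +>\<^bsub>M\<^esub> (a \<odot>\<^bsub>M\<^esub> x)" using ne by simp
  finally show ?thesis unfolding pull_simps .
qed

end

context sgset begin

interpretation R: ring R by (rule ringR)
interpretation J: ideal J R by (rule idealJ)

lemma pull_ab:
  assumes "lmodule R M" "is_dsum M Mg"
  shows "abelian_group (pull R J M Mg)"
proof -
  interpret M: abelian_group M using lmod_ab[OF assms(1)] .
  let ?L = "pull_sub R J M Mg"
  let ?P = "pull R J M Mg"
  note rep = pull_repr[of _ M Mg]
  note add = pull_add[OF assms]
  note inn = pull_in[OF assms]
  show ?thesis
  proof (rule abelian_groupI)
    fix X Y assume X: "X \<in> carrier ?P" and Y: "Y \<in> carrier ?P"
    obtain x where x: "x \<in> carrier M" "X = ?L +>\<^bsub>M\<^esub> x" using rep[OF X] .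
    obtain y where y: "y \<in> carrier M" "Y = ?L +>\<^bsub>M\<^esub> y" using rep[OF Y] .
    show "X \<oplus>\<^bsub>?P\<^esub> Y \<in> carrier ?P" using x y add inn by simp
    show "X \<oplus>\<^bsub>?P\<^esub> Y = Y \<oplus>\<^bsub>?P\<^esub> X" using x y add M.a_comm by simp
  next
    show "\<zero>\<^bsub>?P\<^esub> \<in> carrier ?P" using pull_zero[OF assms] inn by simp
  next
    fix X Y Z assume X: "X \<in> carrier ?P" and Y: "Y \<in> carrier ?P" and Z: "Z \<in> carrier ?P"
    obtain x where x: "x \<in> carrier M" "X = ?L +>\<^bsub>M\<^esub> x" using rep[OF X] .
    obtain y where y: "y \<in> carrier M" "Y = ?L +>\<^bsub>M\<^esub> y" using rep[OF Y] .
    obtain z where z: "z \<in> carrier M" "Z = ?L +>\<^bsub>M\<^esub> z" using rep[OF Z] .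
    show "X \<oplus>\<^bsub>?P\<^esub> Y \<oplus>\<^bsub>?P\<^esub> Z = X \<oplus>\<^bsub>?P\<^esub> (Y \<oplus>\<^bsub>?P\<^esub> Z)"
      using x y z add M.a_assoc by simp
  next
    fix X assume X: "X \<in> carrier ?P"
    obtain x where x: "x \<in> carrier M" "X = ?L +>\<^bsub>M\<^esub> x" using rep[OF X] .
    show "\<zero>\<^bsub>?P\<^esub> \<oplus>\<^bsub>?P\<^esub> X = X" using x add pull_zero[OF assms] by simp
    have "(?L +>\<^bsub>M\<^esub> (\<ominus>\<^bsub>M\<^esub> x)) \<oplus>\<^bsub>?P\<^esub> X = \<zero>\<^bsub>?P\<^esub>"
      using x add pull_zero[OF assms] M.l_neg by simp
    moreover have "?L +>\<^bsub>M\<^esub> (\<ominus>\<^bsub>M\<^esub> x) \<in> carrier ?P" using x inn by simp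
    ultimately show "\<exists>Y\<in>carrier ?P. Y \<oplus>\<^bsub>?P\<^esub> X = \<zero>\<^bsub>?P\<^esub>" by blast
  qed
qed

lemma pull_lmod:
  assumes "lmodule R M" "is_dsum M Mg"
  shows "lmodule (R Quot J) (pull R J M Mg)"
proof -
  interpret M: abelian_group M using lmod_ab[OF assms(1)] .
  let ?L = "pull_sub R J M Mg"
  let ?P = "pull R J M Mg"
  let ?Q = "R Quot J"
  note rep = pull_repr[of _ M Mg]
  note add = pull_add[OF assms]
  note inn = pull_in[OF assms]
  note sm = pull_smult[OF assms]
  note lc = lmod_closed[OF assms(1)]
  have "module_axioms ?Q ?P"
    unfolding module_axioms_def
  proof (intro conjI allI impI)
    fix A X assume A: "A \<in> carrier ?Q" and X: "X \<in> carrier ?P"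
    obtain a where a: "a \<in> carrier R" "A = J +>\<^bsub>R\<^esub> a" using quot_repr[OF A] .
    obtain x where x: "x \<in> carrier M" "X = ?L +>\<^bsub>M\<^esub> x" using rep[OF X] .
    show "A \<odot>\<^bsub>?P\<^esub> X \<in> carrier ?P" using a x sm inn lc by simp
  next
    fix A B X assume A: "A \<in> carrier ?Q" and B: "B \<in> carrier ?Q" and X: "X \<in> carrier ?P"
    obtain a where a: "a \<in> carrier R" "A = J +>\<^bsub>R\<^esub> a" using quot_repr[OF A] .
    obtain b where b: "b \<in> carrier R" "B = J +>\<^bsub>R\<^esub> b" using quot_repr[OF B] .
    obtain x where x: "x \<in> carrier M" "X = ?L +>\<^bsub>M\<^esub> x" using rep[OF X] .
    show "(A \<oplus>\<^bsub>?Q\<^esub> B) \<odot>\<^bsub>?P\<^esub> X = A \<odot>\<^bsub>?P\<^esub> X \<oplus>\<^bsub>?P\<^esub> B \<odot>\<^bsub>?P\<^esub> X"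
      using a b x sm add lc quot_add lmod_ldistr[OF assms(1) a(1) b(1) x(1)] by simp
    show "A \<otimes>\<^bsub>?Q\<^esub> B \<odot>\<^bsub>?P\<^esub> X = A \<odot>\<^bsub>?P\<^esub> (B \<odot>\<^bsub>?P\<^esub> X)"
      using a b x sm lc quot_mult lmod_assoc[OF assms(1) a(1) b(1) x(1)] by simp
  next
    fix A X Y assume A: "A \<in> carrier ?Q" and X: "X \<in> carrier ?P" and Y: "Y \<in> carrier ?P"
    obtain a where a: "a \<in> carrier R" "A = J +>\<^bsub>R\<^esub> a" using quot_repr[OF A] .
    obtain x where x: "x \<in> carrier M" "X = ?L +>\<^bsub>M\<^esub> x" using rep[OF X] .
    obtain y where y: "y \<in> carrier M" "Y = ?L +>\<^bsub>M\<^esub> y" using rep[OF Y] .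
    show "A \<odot>\<^bsub>?P\<^esub> (X \<oplus>\<^bsub>?P\<^esub> Y) = A \<odot>\<^bsub>?P\<^esub> X \<oplus>\<^bsub>?P\<^esub> A \<odot>\<^bsub>?P\<^esub> Y"
      using a x y sm add lc lmod_rdistr[OF assms(1) a(1) x(1) y(1)] by simp
  next
    fix X assume X: "X \<in> carrier ?P"
    obtain x where x: "x \<in> carrier M" "X = ?L +>\<^bsub>M\<^esub> x" using rep[OF X] .
    show "\<one>\<^bsub>?Q\<^esub> \<odot>\<^bsub>?P\<^esub> X = X"
      using x sm quot_one lmod_one[OF assms(1) x(1)] by simp
  qed
  then show ?thesis unfolding lmodule_def using quot_ring pull_ab[OF assms] by blast
qed

lemma pi_hom:
  assumes "lmodule R M" "is_dsum M Mg"
  shows "\<forall>x\<in>carrier M. pull_sub R J M Mg +>\<^bsub>M\<^esub> x \<in> carrier (pull R J M Mg)"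
    "\<forall>x\<in>carrier M. \<forall>y\<in>carrier M. pull_sub R J M Mg +>\<^bsub>M\<^esub> (x \<oplus>\<^bsub>M\<^esub> y)
       = (pull_sub R J M Mg +>\<^bsub>M\<^esub> x) \<oplus>\<^bsub>pull R J M Mg\<^esub> (pull_sub R J M Mg +>\<^bsub>M\<^esub> y)"
  using pull_in[OF assms] pull_add[OF assms] by simp_all

lemma pull_grading_sub:
  assumes "lmodule R M" "is_dsum M Mg"
  shows "pull_grading R J M Mg n \<subseteq> carrier (pull R J M Mg)"
  unfolding pull_grading_def using pull_in[OF assms] dsum_sub[OF assms(2)] by blast

lemma pull_grading_subgroup:
  assumes "lmodule R M" "is_dsum M Mg"
  shows "subgroup (pull_grading R J M Mg n) (add_monoid (pull R J M Mg))"
proof -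
  interpret M: abelian_group M using lmod_ab[OF assms(1)] .
  interpret P: abelian_group "pull R J M Mg" using pull_ab[OF assms] .
  let ?L = "pull_sub R J M Mg"
  let ?P = "pull R J M Mg"
  have sg: "subgroup (Mg n) (add_monoid M)" using dsum_subgroup[OF assms(2)] .
  have Mc: "Mg n \<subseteq> carrier M" using dsum_sub[OF assms(2)] .
  show ?thesis
  proof (rule subgroup_addI[OF pull_ab[OF assms]])
    show "pull_grading R J M Mg n \<subseteq> carrier ?P" by (rule pull_grading_sub[OF assms])
    show "\<zero>\<^bsub>?P\<^esub> \<in> pull_grading R J M Mg n"
      unfolding pull_grading_def pull_zero[OF assms] using subgroup_add_zero[OF sg] by blast
  next
    fix X assume "X \<in> pull_grading R J M Mg n"
    then obtain x where x: "x \<in> Mg n" "X = ?L +>\<^bsub>M\<^esub> x" unfolding pull_grading_def by blast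
    have xc: "x \<in> carrier M" using x(1) Mc by blast
    have nx: "\<ominus>\<^bsub>M\<^esub> x \<in> Mg n" using subgroup_add_neg[OF lmod_ab[OF assms(1)] sg x(1)] .
    have "(?L +>\<^bsub>M\<^esub> (\<ominus>\<^bsub>M\<^esub> x)) \<oplus>\<^bsub>?P\<^esub> X = \<zero>\<^bsub>?P\<^esub>"
      using x(2) xc pull_add[OF assms] pull_zero[OF assms] M.l_neg by simp
    then have "\<ominus>\<^bsub>?P\<^esub> X = ?L +>\<^bsub>M\<^esub> (\<ominus>\<^bsub>M\<^esub> x)"
      using P.minus_equality pull_in[OF assms] xc x(2) by simp
    then show "\<ominus>\<^bsub>?P\<^esub> X \<in> pull_grading R J M Mg n" unfolding pull_grading_def using nx by blast
  next
    fix X Y assume "X \<in> pull_grading R J M Mg n" "Y \<in> pull_grading R J M Mg n"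
    then obtain x y where x: "x \<in> Mg n" "X = ?L +>\<^bsub>M\<^esub> x" and y: "y \<in> Mg n" "Y = ?L +>\<^bsub>M\<^esub> y"
      unfolding pull_grading_def by blast
    have "x \<oplus>\<^bsub>M\<^esub> y \<in> Mg n" using subgroup_add_closed[OF sg x(1) y(1)] .
    moreover have "X \<oplus>\<^bsub>?P\<^esub> Y = ?L +>\<^bsub>M\<^esub> (x \<oplus>\<^bsub>M\<^esub> y)"
      using x y Mc pull_add[OF assms] by blast
    ultimately show "X \<oplus>\<^bsub>?P\<^esub> Y \<in> pull_grading R J M Mg n" unfolding pull_grading_def by blast
  qed
qed

end

context sgset begin

interpretation R: ring R by (rule ringR)
interpretation J: ideal J R by (rule idealJ)

lemma pull_unique:
  assumes "lmodule R M" "is_dsum M Mg"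
    and c: "\<forall>n. c n \<in> pull_grading R J M Mg n" and d: "\<forall>n. d n \<in> pull_grading R J M Mg n"
    and fc: "finite {n. c n \<noteq> \<zero>\<^bsub>pull R J M Mg\<^esub>}" and fd: "finite {n. d n \<noteq> \<zero>\<^bsub>pull R J M Mg\<^esub>}"
    and eq: "finsum (pull R J M Mg) c {n. c n \<noteq> \<zero>\<^bsub>pull R J M Mg\<^esub>}
           = finsum (pull R J M Mg) d {n. d n \<noteq> \<zero>\<^bsub>pull R J M Mg\<^esub>}"
  shows "c = d"
proof -
  interpret M: abelian_group M using lmod_ab[OF assms(1)] .
  let ?L = "pull_sub R J M Mg"
  let ?P = "pull R J M Mg"
  let ?pi = "\<lambda>x. ?L +>\<^bsub>M\<^esub> x"
  have Mc: "\<And>n. Mg n \<subseteq> carrier M" using dsum_sub[OF assms(2)] .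
  have z0: "\<And>n. \<zero>\<^bsub>M\<^esub> \<in> Mg n" using subgroup_add_zero[OF dsum_subgroup[OF assms(2)]] .
  have pz: "\<zero>\<^bsub>?P\<^esub> = ?pi \<zero>\<^bsub>M\<^esub>" using pull_zero[OF assms(1,2)] .
  note ph = pi_hom[OF assms(1,2)]
  have lift: "\<exists>c'. (\<forall>n. c' n \<in> Mg n) \<and> (\<forall>n. ?pi (c' n) = c n) \<and> finite {n. c' n \<noteq> \<zero>\<^bsub>M\<^esub>}"
    if c: "\<forall>n. c n \<in> pull_grading R J M Mg n" and fc: "finite {n. c n \<noteq> \<zero>\<^bsub>?P\<^esub>}" for c
  proof -
    define c' where "c' n = (if c n = \<zero>\<^bsub>?P\<^esub> then \<zero>\<^bsub>M\<^esub> else (SOME x. x \<in> Mg n \<and> c n = ?pi x))" for n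
    have p: "c' n \<in> Mg n \<and> ?pi (c' n) = c n" for n
    proof (cases "c n = \<zero>\<^bsub>?P\<^esub>")
      case True
      then show ?thesis unfolding c'_def using z0 pz by simp
    next
      case False
      have "\<exists>x. x \<in> Mg n \<and> c n = ?pi x" using c unfolding pull_grading_def by blast
      then have "(SOME x. x \<in> Mg n \<and> c n = ?pi x) \<in> Mg n \<and> c n = ?pi (SOME x. x \<in> Mg n \<and> c n = ?pi x)"
        by (rule someI_ex)
      then show ?thesis unfolding c'_def using False by simp
    qed
    have "{n. c' n \<noteq> \<zero>\<^bsub>M\<^esub>} \<subseteq> {n. c n \<noteq> \<zero>\<^bsub>?P\<^esub>}" unfolding c'_def by auto
    then have "finite {n. c' n \<noteq> \<zero>\<^bsub>M\<^esub>}" using fc finite_subset by blast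
    then show ?thesis using p by blast
  qed
  obtain c' where c': "\<forall>n. c' n \<in> Mg n" "\<forall>n. ?pi (c' n) = c n" "finite {n. c' n \<noteq> \<zero>\<^bsub>M\<^esub>}"
    using lift[OF c fc] by blast
  obtain d' where d': "\<forall>n. d' n \<in> Mg n" "\<forall>n. ?pi (d' n) = d n" "finite {n. d' n \<noteq> \<zero>\<^bsub>M\<^esub>}"
    using lift[OF d fd] by blast
  have c'c: "\<And>n. c' n \<in> carrier M" using c'(1) Mc by blast
  have d'c: "\<And>n. d' n \<in> carrier M" using d'(1) Mc by blast
  have cc: "(\<lambda>n. ?pi (c' n)) = c" using c'(2) by simp
  have dd: "(\<lambda>n. ?pi (d' n)) = d" using d'(2) by simp
  let ?sc = "finsum M c' {n. c' n \<noteq> \<zero>\<^bsub>M\<^esub>}"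
  let ?sd = "finsum M d' {n. d' n \<noteq> \<zero>\<^bsub>M\<^esub>}"
  have "?pi ?sc = finsum ?P c {n. c n \<noteq> \<zero>\<^bsub>?P\<^esub>}"
    using hom_finsum_supp(2)[OF lmod_ab[OF assms(1)] pull_ab[OF assms(1,2)] ph c'(3) c'c] c'(2) by simp
  moreover have "?pi ?sd = finsum ?P d {n. d n \<noteq> \<zero>\<^bsub>?P\<^esub>}"
    using hom_finsum_supp(2)[OF lmod_ab[OF assms(1)] pull_ab[OF assms(1,2)] ph d'(3) d'c] d'(2) by simp
  ultimately have pe: "?pi ?sc = ?pi ?sd" using eq by simp
  have scc: "?sc \<in> carrier M" using c'c by (intro M.finsum_closed) blast
  have sdc: "?sd \<in> carrier M" using d'c by (intro M.finsum_closed) blast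
  have Lab: "abelian_subgroup ?L M" using L_absub[OF assms(1,2)] .
  have "?sc \<in> ?pi ?sd" using pe abelian_subgroup.a_rcos_self[OF Lab scc] by simp
  then have diffL: "?sc \<oplus>\<^bsub>M\<^esub> \<ominus>\<^bsub>M\<^esub> ?sd \<in> ?L" using abelian_subgroup.a_rcos_module_imp[OF Lab sdc] by blast
  define e where "e n = c' n \<oplus>\<^bsub>M\<^esub> \<ominus>\<^bsub>M\<^esub> d' n" for n
  have ec: "\<And>n. e n \<in> carrier M" unfolding e_def using c'c d'c by simp
  have eM: "\<forall>n. e n \<in> Mg n" unfolding e_def
    using c'(1) d'(1) subgroup_add_closed[OF dsum_subgroup[OF assms(2)]]
      subgroup_add_neg[OF lmod_ab[OF assms(1)] dsum_subgroup[OF assms(2)]] by blast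
  let ?F = "{n. c' n \<noteq> \<zero>\<^bsub>M\<^esub>} \<union> {n. d' n \<noteq> \<zero>\<^bsub>M\<^esub>}"
  have fF: "finite ?F" using c'(3) d'(3) by simp
  have eF: "{n. e n \<noteq> \<zero>\<^bsub>M\<^esub>} \<subseteq> ?F" unfolding e_def by auto
  have fe: "finite {n. e n \<noteq> \<zero>\<^bsub>M\<^esub>}" using fF eF finite_subset by blast
  have s1: "finsum M e {n. e n \<noteq> \<zero>\<^bsub>M\<^esub>} = finsum M e ?F"
    by (rule finsum_supp_eq[OF M.abelian_monoid_axioms fF eF ec])
  have s2: "?sc = finsum M c' ?F"
    by (rule finsum_supp_eq[OF M.abelian_monoid_axioms fF _ c'c]) blast
  have s3: "?sd = finsum M d' ?F"
    by (rule finsum_supp_eq[OF M.abelian_monoid_axioms fF _ d'c]) blast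
  have "finsum M e ?F \<oplus>\<^bsub>M\<^esub> finsum M d' ?F = finsum M (\<lambda>n. e n \<oplus>\<^bsub>M\<^esub> d' n) ?F"
    using M.finsum_addf[of e ?F d'] ec d'c by (simp add: Pi_def)
  also have "\<dots> = finsum M c' ?F"
    by (rule M.finsum_cong') (simp_all add: e_def c'c d'c M.a_assoc M.l_neg Pi_def)
  finally have h: "finsum M e ?F \<oplus>\<^bsub>M\<^esub> ?sd = ?sc" using s2 s3 by simp
  have xc: "finsum M e ?F \<in> carrier M" using ec by (intro M.finsum_closed) blast
  have "(finsum M e ?F \<oplus>\<^bsub>M\<^esub> ?sd) \<oplus>\<^bsub>M\<^esub> \<ominus>\<^bsub>M\<^esub> ?sd = finsum M e ?F"
    using xc sdc by (simp add: M.a_assoc M.r_neg)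
  then have "finsum M e ?F = ?sc \<oplus>\<^bsub>M\<^esub> \<ominus>\<^bsub>M\<^esub> ?sd" using h by simp
  then have eL: "finsum M e {n. e n \<noteq> \<zero>\<^bsub>M\<^esub>} \<in> ?L" using s1 diffL by simp
  have Lsg: "subgroup ?L (add_monoid M)" using L_subgroup[OF assms(1,2)] .
  have Leq: "?L = int_sum M (\<lambda>n. ?L \<inter> Mg n)" using L_sg(1)[OF assms(1,2)] by (simp add: sg_submodule_def)
  have Lcmp: "\<forall>x\<in>?L. \<forall>n. cmp M Mg x n \<in> ?L"
    using sg_char[OF lmod_ab[OF assms(1)] assms(2) Lsg] Leq by (rule iffD1)
  have "cmp M Mg (finsum M e {n. e n \<noteq> \<zero>\<^bsub>M\<^esub>}) = e"
    by (rule cmp_eq[OF assms(2) eM fe refl])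
  then have enL: "\<And>n. e n \<in> ?L" using Lcmp eL by metis
  show "c = d"
  proof
    fix n
    have "?pi (c' n) = ?pi (d' n)"
      by (rule coset_eqI'[OF Lab c'c d'c]) (use enL[of n] in \<open>simp add: e_def\<close>)
    then show "c n = d n" using c'(2) d'(2) by simp
  qed
qed

end

context sgset begin

interpretation R: ring R by (rule ringR)
interpretation J: ideal J R by (rule idealJ)

lemma pull_dsum:
  assumes "lmodule R M" "is_dsum M Mg"
  shows "is_dsum (pull R J M Mg) (pull_grading R J M Mg)"
proof -
  interpret P: abelian_group "pull R J M Mg" using pull_ab[OF assms] .
  let ?P = "pull R J M Mg"
  let ?L = "pull_sub R J M Mg"
  have c1: "\<forall>n. subgroup (pull_grading R J M Mg n) (add_monoid ?P)"
    using pull_grading_subgroup[OF assms] by blast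
  have c2: "carrier ?P = int_sum ?P (pull_grading R J M Mg)"
  proof
    show "carrier ?P \<subseteq> int_sum ?P (pull_grading R J M Mg)"
    proof
      fix X assume X: "X \<in> carrier ?P"
      obtain x where x: "x \<in> carrier M" "X = ?L +>\<^bsub>M\<^esub> x" using pull_repr[OF X] .
      have xi: "x \<in> int_sum M Mg" using x(1) dsum_carrier[OF assms(2)] by simp
      have "(\<lambda>x. ?L +>\<^bsub>M\<^esub> x) x \<in> int_sum ?P (pull_grading R J M Mg)"
        by (rule hom_int_sum[OF lmod_ab[OF assms(1)] pull_ab[OF assms] pi_hom[OF assms] dsum_sub[OF assms(2)] _ xi])
           (simp add: pull_grading_def)
      then show "X \<in> int_sum ?P (pull_grading R J M Mg)" using x(2) by simp
    qed
    show "int_sum ?P (pull_grading R J M Mg) \<subseteq> carrier ?P"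
    proof
      fix X assume "X \<in> int_sum ?P (pull_grading R J M Mg)"
      then obtain c where c: "\<forall>n. c n \<in> pull_grading R J M Mg n" "X = finsum ?P c {n. c n \<noteq> \<zero>\<^bsub>?P\<^esub>}"
        unfolding int_sum_def by blast
      have "\<And>n. c n \<in> carrier ?P" using c(1) pull_grading_sub[OF assms] by blast
      then show "X \<in> carrier ?P" unfolding c(2) by (intro P.finsum_closed) blast
    qed
  qed
  have c3: "\<forall>c d. (\<forall>n. c n \<in> pull_grading R J M Mg n) \<and> (\<forall>n. d n \<in> pull_grading R J M Mg n)
          \<and> finite {n. c n \<noteq> \<zero>\<^bsub>?P\<^esub>} \<and> finite {n. d n \<noteq> \<zero>\<^bsub>?P\<^esub>}
          \<and> finsum ?P c {n. c n \<noteq> \<zero>\<^bsub>?P\<^esub>} = finsum ?P d {n. d n \<noteq> \<zero>\<^bsub>?P\<^esub>}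
          \<longrightarrow> c = d"
  proof (intro allI impI)
    fix c d assume H: "(\<forall>n. c n \<in> pull_grading R J M Mg n) \<and> (\<forall>n. d n \<in> pull_grading R J M Mg n)
          \<and> finite {n. c n \<noteq> \<zero>\<^bsub>?P\<^esub>} \<and> finite {n. d n \<noteq> \<zero>\<^bsub>?P\<^esub>}
          \<and> finsum ?P c {n. c n \<noteq> \<zero>\<^bsub>?P\<^esub>} = finsum ?P d {n. d n \<noteq> \<zero>\<^bsub>?P\<^esub>}"
    show "c = d" using H by (elim conjE) (rule pull_unique[OF assms])
  qed
  show ?thesis unfolding is_dsum_def using c1 c2 c3 by (intro conjI)
qed

lemma pull_grading_cond:
  assumes "sg_module R Rg M Mg" "0 \<le> m" "A \<in> quot_grading R J Rg m" "X \<in> pull_grading R J M Mg n"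
  shows "A \<odot>\<^bsub>pull R J M Mg\<^esub> X \<in> int_sum_le (pull R J M Mg) (pull_grading R J M Mg) (m + n)"
proof -
  have lm: "lmodule R M" and ds: "is_dsum M Mg"
    and gr: "\<forall>a\<in>Rg m. \<forall>x\<in>Mg n. a \<odot>\<^bsub>M\<^esub> x \<in> int_sum_le M Mg (m + n)"
    using assms(1,2) by (simp_all add: sg_module_def)
  note A2 = lm ds
  interpret M: abelian_group M using lmod_ab[OF lm] .
  let ?P = "pull R J M Mg"
  let ?L = "pull_sub R J M Mg"
  obtain a where a: "a \<in> Rg m" "A = J +>\<^bsub>R\<^esub> a" using assms(3) unfolding quot_grading_def by blast
  obtain x where x: "x \<in> Mg n" "X = ?L +>\<^bsub>M\<^esub> x" using assms(4) unfolding pull_grading_def by blast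
  have ac: "a \<in> carrier R" using a(1) grading_carrier by blast
  have xc: "x \<in> carrier M" using x(1) dsum_sub[OF ds] by blast
  have e: "A \<odot>\<^bsub>?P\<^esub> X = ?L +>\<^bsub>M\<^esub> (a \<odot>\<^bsub>M\<^esub> x)" using a(2) x(2) pull_smult[OF A2 ac xc] by simp
  have ax: "a \<odot>\<^bsub>M\<^esub> x \<in> int_sum M (\<lambda>k. if k \<le> m + n then Mg k else {\<zero>\<^bsub>M\<^esub>})"
    using gr a(1) x(1) unfolding int_sum_le_def by blast
  have S: "(if k \<le> m + n then Mg k else {\<zero>\<^bsub>M\<^esub>}) \<subseteq> carrier M" for k
    using dsum_sub[OF ds] by simp
  have T: "(\<lambda>x. ?L +>\<^bsub>M\<^esub> x) ` (if k \<le> m + n then Mg k else {\<zero>\<^bsub>M\<^esub>})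
      \<subseteq> (if k \<le> m + n then pull_grading R J M Mg k else {\<zero>\<^bsub>?P\<^esub>})" for k
    using pull_zero[OF A2] by (simp add: pull_grading_def)
  have "(\<lambda>x. ?L +>\<^bsub>M\<^esub> x) (a \<odot>\<^bsub>M\<^esub> x)
      \<in> int_sum ?P (\<lambda>k. if k \<le> m + n then pull_grading R J M Mg k else {\<zero>\<^bsub>?P\<^esub>})"
    by (rule hom_int_sum[OF lmod_ab[OF lm] pull_ab[OF A2] pi_hom[OF A2] S T ax])
  then show ?thesis unfolding e int_sum_le_def by simp
qed

lemma part1:
  assumes "sg_module R Rg M Mg"
  shows "sg_module (R Quot J) (quot_grading R J Rg) (pull R J M Mg) (pull_grading R J M Mg)"
proof -
  have lm: "lmodule R M" and ds: "is_dsum M Mg" using assms by (simp_all add: sg_module_def)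
  show ?thesis unfolding sg_module_def
    using pull_lmod[OF lm ds] pull_dsum[OF lm ds] pull_grading_cond[OF assms] by blast
qed

lemma push_simps:
  "carrier (push R J N) = carrier N"
  "add (push R J N) = add N"
  "zero (push R J N) = zero N"
  "smult (push R J N) r x = smult N (J +>\<^bsub>R\<^esub> r) x"
  by (simp_all add: push_def)

lemma push_finsum: "finsum (push R J N) f A = finsum N f A"
  by (simp add: finsum_def finprod_def push_def)

lemma push_int_sum: "int_sum (push R J N) S = int_sum N S"
  unfolding int_sum_def push_finsum by (simp add: push_simps)

lemma push_zero_set: "{\<zero>\<^bsub>push R J N\<^esub>} = {\<zero>\<^bsub>N\<^esub>}"
  by (simp add: push_def)

lemma push_int_sum_le: "int_sum_le (push R J N) S k = int_sum_le N S k"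
  unfolding int_sum_le_def push_int_sum push_zero_set ..

lemma push_subgroup: "subgroup S (add_monoid (push R J N)) = subgroup S (add_monoid N)"
  by (simp add: subgroup_def m_inv_def push_def)

lemma push_dsum: "is_dsum (push R J N) S = is_dsum N S"
  unfolding is_dsum_def push_subgroup push_int_sum push_finsum by (simp add: push_simps)

lemma push_ab:
  assumes "abelian_group N"
  shows "abelian_group (push R J N)"
proof -
  interpret N: abelian_group N by fact
  show ?thesis
  proof (rule abelian_groupI)
    fix x assume x: "x \<in> carrier (push R J N)"
    show "\<exists>y\<in>carrier (push R J N). y \<oplus>\<^bsub>push R J N\<^esub> x = \<zero>\<^bsub>push R J N\<^esub>"
      using x N.l_neg N.a_inv_closed unfolding push_simps by blast
  qed (simp_all add: push_simps N.a_ac)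
qed

lemma push_lmod:
  assumes "lmodule (R Quot J) N"
  shows "lmodule R (push R J N)"
proof -
  have "module_axioms R (push R J N)"
    unfolding module_axioms_def push_simps
  proof (intro conjI allI impI)
    fix a b x assume a: "a \<in> carrier R" and b: "b \<in> carrier R" and x: "x \<in> carrier N"
    show "(J +>\<^bsub>R\<^esub> (a \<oplus>\<^bsub>R\<^esub> b)) \<odot>\<^bsub>N\<^esub> x = (J +>\<^bsub>R\<^esub> a) \<odot>\<^bsub>N\<^esub> x \<oplus>\<^bsub>N\<^esub> (J +>\<^bsub>R\<^esub> b) \<odot>\<^bsub>N\<^esub> x"
      using lmod_ldistr[OF assms quot_in[OF a] quot_in[OF b] x] quot_add[OF a b] by simp
    show "(J +>\<^bsub>R\<^esub> (a \<otimes>\<^bsub>R\<^esub> b)) \<odot>\<^bsub>N\<^esub> x = (J +>\<^bsub>R\<^esub> a) \<odot>\<^bsub>N\<^esub> ((J +>\<^bsub>R\<^esub> b) \<odot>\<^bsub>N\<^esub> x)"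
      using lmod_assoc[OF assms quot_in[OF a] quot_in[OF b] x] quot_mult[OF a b] by simp
  next
    fix a x assume a: "a \<in> carrier R" and x: "x \<in> carrier N"
    show "(J +>\<^bsub>R\<^esub> a) \<odot>\<^bsub>N\<^esub> x \<in> carrier N" using lmod_closed[OF assms quot_in[OF a] x] .
  next
    fix a x y assume a: "a \<in> carrier R" and x: "x \<in> carrier N" and y: "y \<in> carrier N"
    show "(J +>\<^bsub>R\<^esub> a) \<odot>\<^bsub>N\<^esub> (x \<oplus>\<^bsub>N\<^esub> y) = (J +>\<^bsub>R\<^esub> a) \<odot>\<^bsub>N\<^esub> x \<oplus>\<^bsub>N\<^esub> (J +>\<^bsub>R\<^esub> a) \<odot>\<^bsub>N\<^esub> y"
      using lmod_rdistr[OF assms quot_in[OF a] x y] by simp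
  next
    fix x assume x: "x \<in> carrier N"
    show "(J +>\<^bsub>R\<^esub> \<one>\<^bsub>R\<^esub>) \<odot>\<^bsub>N\<^esub> x = x" using lmod_one[OF assms x] quot_one by simp
  qed
  then show ?thesis unfolding lmodule_def using ringR push_ab[OF lmod_ab[OF assms]] by blast
qed

lemma part3:
  assumes "sg_module (R Quot J) (quot_grading R J Rg) N Ng"
  shows "sg_module R Rg (push R J N) Ng"
proof -
  have lm: "lmodule (R Quot J) N" and ds: "is_dsum N Ng"
    and gr: "\<forall>m n. 0 \<le> m \<longrightarrow> (\<forall>A\<in>quot_grading R J Rg m. \<forall>x\<in>Ng n. A \<odot>\<^bsub>N\<^esub> x \<in> int_sum_le N Ng (m + n))"
    using assms by (simp_all add: sg_module_def)
  have "\<forall>m n. 0 \<le> m \<longrightarrow> (\<forall>a\<in>Rg m. \<forall>x\<in>Ng n. a \<odot>\<^bsub>push R J N\<^esub> x \<in> int_sum_le (push R J N) Ng (m + n))"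
  proof (intro allI impI ballI)
    fix m n a x assume m: "0 \<le> m" and a: "a \<in> Rg m" and x: "x \<in> Ng n"
    have "J +>\<^bsub>R\<^esub> a \<in> quot_grading R J Rg m" using a unfolding quot_grading_def by blast
    then show "a \<odot>\<^bsub>push R J N\<^esub> x \<in> int_sum_le (push R J N) Ng (m + n)"
      using gr m x by (simp add: push_simps push_int_sum_le)
  qed
  then show ?thesis unfolding sg_module_def using push_lmod[OF lm] ds push_dsum by blast
qed

lemma part4:
  assumes "\<gamma> \<in> sg_hom (R Quot J) N Ng N' Ng'"
  shows "\<gamma> \<in> sg_hom R (push R J N) Ng (push R J N') Ng'"
  using assms quot_in unfolding sg_hom_def lmod_hom_def by (simp add: push_simps)

end

lemma sg_hom_D:
  assumes "f \<in> sg_hom R M Mg N Ng"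
  shows "\<And>x. x \<in> carrier M \<Longrightarrow> f x \<in> carrier N"
    "\<And>x y. x \<in> carrier M \<Longrightarrow> y \<in> carrier M \<Longrightarrow> f (x \<oplus>\<^bsub>M\<^esub> y) = f x \<oplus>\<^bsub>N\<^esub> f y"
    "\<And>a x. a \<in> carrier R \<Longrightarrow> x \<in> carrier M \<Longrightarrow> f (a \<odot>\<^bsub>M\<^esub> x) = a \<odot>\<^bsub>N\<^esub> f x"
    "\<And>n. f ` Mg n \<subseteq> Ng n"
    "f \<in> extensional (carrier M)"
    "f \<in> lmod_hom R M N"
  using assms unfolding sg_hom_def lmod_hom_def by auto

lemma sg_hom_compose:
  assumes "is_dsum A Ag" "f \<in> sg_hom R A Ag B Bg" "g \<in> sg_hom R B Bg C Cg" "lmodule R A"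
  shows "compose (carrier A) g f \<in> sg_hom R A Ag C Cg"
proof -
  note f = sg_hom_D[OF assms(2)] and g = sg_hom_D[OF assms(3)]
  have ac: "x \<oplus>\<^bsub>A\<^esub> y \<in> carrier A" if "x \<in> carrier A" "y \<in> carrier A" for x y
    using abelian_monoid.a_closed[OF abelian_group.axioms(1)[OF lmod_ab[OF assms(4)]] that] .
  have "compose (carrier A) g f \<in> lmod_hom R A C"
    unfolding lmod_hom_def compose_def using f g ac lmod_closed[OF assms(4)] by (auto simp: Pi_def)
  moreover have "compose (carrier A) g f ` Ag n \<subseteq> Cg n" for n
  proof
    fix y assume "y \<in> compose (carrier A) g f ` Ag n"
    then obtain x where x: "x \<in> Ag n" "y = compose (carrier A) g f x" by blast
    have xc: "x \<in> carrier A" using x(1) dsum_sub[OF assms(1)] by blast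
    have "f x \<in> Bg n" using f(4) x(1) by blast
    then have "g (f x) \<in> Cg n" using g(4) by blast
    then show "y \<in> Cg n" using x(2) xc by (simp add: compose_def)
  qed
  moreover have "compose (carrier A) g f \<in> extensional (carrier A)" by (rule compose_extensional)
  ultimately show ?thesis unfolding sg_hom_def by blast
qed

context sgset begin

interpretation R: ring R by (rule ringR)
interpretation J: ideal J R by (rule idealJ)

lemma hom_L:
  assumes "sg_module R Rg M Mg" "sg_module R Rg M' Mg'" "\<beta> \<in> sg_hom R M Mg M' Mg'"
    "l \<in> pull_sub R J M Mg"
  shows "\<beta> l \<in> pull_sub R J M' Mg'"
proof -
  have lm: "lmodule R M" "is_dsum M Mg" "lmodule R M'" "is_dsum M' Mg'"
    using assms(1,2) by (simp_all add: sg_module_def)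
  note b = sg_hom_D[OF assms(3)]
  let ?P = "{x \<in> carrier M. \<beta> x \<in> pull_sub R J M' Mg'}"
  have "sg_submodule R M Mg ?P"
    by (rule sg_submodule_vimage[OF lm b(6) b(4) L_sg(1)[OF lm(3,4)]])
  moreover have "ideal_times J M \<subseteq> ?P"
  proof
    fix z assume "z \<in> ideal_times J M"
    then obtain j x where jx: "j \<in> J" "x \<in> carrier M" "z = j \<odot>\<^bsub>M\<^esub> x" unfolding ideal_times_def by blast
    have jc: "j \<in> carrier R" using jx(1) J.a_subset by blast
    have "\<beta> z = j \<odot>\<^bsub>M'\<^esub> \<beta> x" using b(3)[OF jc jx(2)] jx(3) by simp
    moreover have "j \<odot>\<^bsub>M'\<^esub> \<beta> x \<in> pull_sub R J M' Mg'" using L_JM[OF lm(3,4) jx(1) b(1)[OF jx(2)]] .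
    moreover have "z \<in> carrier M" using lmod_closed[OF lm(1) jc jx(2)] jx(3) by simp
    ultimately show "z \<in> ?P" by simp
  qed
  ultimately have "pull_sub R J M Mg \<subseteq> ?P" by (rule L_sg(3)[OF lm(1,2)])
  then show ?thesis using assms(4) by blast
qed

lemma hom_L0:
  assumes "sg_module R Rg M Mg" "sg_module (R Quot J) (quot_grading R J Rg) N Ng"
    "\<alpha> \<in> sg_hom R M Mg (push R J N) Ng" "l \<in> pull_sub R J M Mg"
  shows "\<alpha> l = \<zero>\<^bsub>N\<^esub>"
proof -
  have lm: "lmodule R M" "is_dsum M Mg" using assms(1) by (simp_all add: sg_module_def)
  have pN: "sg_module R Rg (push R J N) Ng" using part3[OF assms(2)] .
  have lp: "lmodule R (push R J N)" "is_dsum (push R J N) Ng" using pN by (simp_all add: sg_module_def)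
  have lN: "lmodule (R Quot J) N" using assms(2) by (simp add: sg_module_def)
  note b = sg_hom_D[OF assms(3)]
  let ?P = "{x \<in> carrier M. \<alpha> x \<in> {\<zero>\<^bsub>push R J N\<^esub>}}"
  have "sg_submodule R M Mg ?P"
    by (rule sg_submodule_vimage[OF lm lp b(6) b(4) sg_submodule_zero[OF lp]])
  moreover have "ideal_times J M \<subseteq> ?P"
  proof
    fix z assume "z \<in> ideal_times J M"
    then obtain j x where jx: "j \<in> J" "x \<in> carrier M" "z = j \<odot>\<^bsub>M\<^esub> x" unfolding ideal_times_def by blast
    have jc: "j \<in> carrier R" using jx(1) J.a_subset by blast
    have "\<alpha> z = (J +>\<^bsub>R\<^esub> j) \<odot>\<^bsub>N\<^esub> \<alpha> x" using b(3)[OF jc jx(2)] jx(3) by (simp add: push_simps)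
    also have "\<dots> = \<zero>\<^bsub>R Quot J\<^esub> \<odot>\<^bsub>N\<^esub> \<alpha> x" using quot_J[OF jx(1)] quot_zero by simp
    also have "\<dots> = \<zero>\<^bsub>N\<^esub>" using lmod_zero_l[OF lN] b(1)[OF jx(2)] by (simp add: push_simps)
    finally have "\<alpha> z = \<zero>\<^bsub>N\<^esub>" .
    moreover have "z \<in> carrier M" using lmod_closed[OF lm(1) jc jx(2)] jx(3) by simp
    ultimately show "z \<in> ?P" by (simp add: push_simps)
  qed
  ultimately have "pull_sub R J M Mg \<subseteq> ?P" by (rule L_sg(3)[OF lm(1,2)])
  then show ?thesis using assms(4) by (auto simp: push_simps)
qed

lemma adj_eval:
  assumes "sg_module R Rg M Mg" "sg_module (R Quot J) (quot_grading R J Rg) N Ng"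
    "\<alpha> \<in> sg_hom R M Mg (push R J N) Ng" "x \<in> carrier M"
  shows "adj_map R J M Mg \<alpha> (pull_sub R J M Mg +>\<^bsub>M\<^esub> x) = \<alpha> x"
proof -
  have lm: "lmodule R M" "is_dsum M Mg" using assms(1) by (simp_all add: sg_module_def)
  have lN: "lmodule (R Quot J) N" using assms(2) by (simp add: sg_module_def)
  interpret N: abelian_group N using lmod_ab[OF lN] .
  note b = sg_hom_D[OF assms(3)]
  have "the_elem (\<alpha> ` (pull_sub R J M Mg +>\<^bsub>M\<^esub> x)) = \<alpha> x"
  proof (rule the_elem_coset_image[OF L_absub[OF lm] assms(4)])
    fix h assume h: "h \<in> pull_sub R J M Mg"
    have hc: "h \<in> carrier M" using h L_carrier[OF lm] by blast
    have "\<alpha> (h \<oplus>\<^bsub>M\<^esub> x) = \<alpha> h \<oplus>\<^bsub>N\<^esub> \<alpha> x" using b(2)[OF hc assms(4)] by (simp add: push_simps)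
    then show "\<alpha> (h \<oplus>\<^bsub>M\<^esub> x) = \<alpha> x"
      using hom_L0[OF assms(1-3) h] b(1)[OF assms(4)] by (simp add: push_simps)
  qed
  then show ?thesis unfolding adj_map_def using pull_in[OF lm assms(4)] by simp
qed

lemma pull_map_eval:
  assumes "sg_module R Rg M Mg" "sg_module R Rg M' Mg'" "\<beta> \<in> sg_hom R M Mg M' Mg'" "x \<in> carrier M"
  shows "pull_map R J M Mg M' Mg' \<beta> (pull_sub R J M Mg +>\<^bsub>M\<^esub> x) = pull_sub R J M' Mg' +>\<^bsub>M'\<^esub> \<beta> x"
proof -
  have lm: "lmodule R M" "is_dsum M Mg" "lmodule R M'" "is_dsum M' Mg'"
    using assms(1,2) by (simp_all add: sg_module_def)
  note b = sg_hom_D[OF assms(3)]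
  have "the_elem ((\<lambda>y. pull_sub R J M' Mg' +>\<^bsub>M'\<^esub> \<beta> y) ` (pull_sub R J M Mg +>\<^bsub>M\<^esub> x))
      = pull_sub R J M' Mg' +>\<^bsub>M'\<^esub> \<beta> x"
  proof (rule the_elem_coset_image[OF L_absub[OF lm(1,2)] assms(4)])
    fix h assume h: "h \<in> pull_sub R J M Mg"
    have hc: "h \<in> carrier M" using h L_carrier[OF lm(1,2)] by blast
    have "\<beta> (h \<oplus>\<^bsub>M\<^esub> x) = \<beta> h \<oplus>\<^bsub>M'\<^esub> \<beta> x" using b(2)[OF hc assms(4)] .
    then show "pull_sub R J M' Mg' +>\<^bsub>M'\<^esub> \<beta> (h \<oplus>\<^bsub>M\<^esub> x) = pull_sub R J M' Mg' +>\<^bsub>M'\<^esub> \<beta> x"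
      using coset_eqI[OF L_absub[OF lm(3,4)] b(1)[OF assms(4)] hom_L[OF assms(1-3) h]] by simp
  qed
  then show ?thesis unfolding pull_map_def using pull_in[OF lm(1,2) assms(4)] by simp
qed

end

context sgset begin

interpretation R: ring R by (rule ringR)
interpretation J: ideal J R by (rule idealJ)

lemma part2:
  assumes "sg_module R Rg M Mg" "sg_module R Rg M' Mg'" "\<beta> \<in> sg_hom R M Mg M' Mg'"
  shows "pull_map R J M Mg M' Mg' \<beta> \<in>
          sg_hom (R Quot J) (pull R J M Mg) (pull_grading R J M Mg) (pull R J M' Mg') (pull_grading R J M' Mg')"
proof -
  have lm: "lmodule R M" "is_dsum M Mg" "lmodule R M'" "is_dsum M' Mg'"
    using assms(1,2) by (simp_all add: sg_module_def)
  interpret M: abelian_group M using lmod_ab[OF lm(1)] .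
  note b = sg_hom_D[OF assms(3)]
  let ?pm = "pull_map R J M Mg M' Mg' \<beta>"
  let ?L = "pull_sub R J M Mg" and ?L' = "pull_sub R J M' Mg'"
  let ?P = "pull R J M Mg" and ?P' = "pull R J M' Mg'"
  note ev = pull_map_eval[OF assms]
  have h1: "?pm \<in> carrier ?P \<rightarrow> carrier ?P'"
  proof
    fix X assume X: "X \<in> carrier ?P"
    obtain x where x: "x \<in> carrier M" "X = ?L +>\<^bsub>M\<^esub> x" using pull_repr[OF X] .
    show "?pm X \<in> carrier ?P'" using x ev pull_in[OF lm(3,4) b(1)[OF x(1)]] by simp
  qed
  have h2: "\<forall>X\<in>carrier ?P. \<forall>Y\<in>carrier ?P. ?pm (X \<oplus>\<^bsub>?P\<^esub> Y) = ?pm X \<oplus>\<^bsub>?P'\<^esub> ?pm Y"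
  proof (intro ballI)
    fix X Y assume X: "X \<in> carrier ?P" and Y: "Y \<in> carrier ?P"
    obtain x where x: "x \<in> carrier M" "X = ?L +>\<^bsub>M\<^esub> x" using pull_repr[OF X] .
    obtain y where y: "y \<in> carrier M" "Y = ?L +>\<^bsub>M\<^esub> y" using pull_repr[OF Y] .
    have "?pm (X \<oplus>\<^bsub>?P\<^esub> Y) = ?L' +>\<^bsub>M'\<^esub> \<beta> (x \<oplus>\<^bsub>M\<^esub> y)"
      using x y pull_add[OF lm(1,2) x(1) y(1)] ev by simp
    also have "\<dots> = (?L' +>\<^bsub>M'\<^esub> \<beta> x) \<oplus>\<^bsub>?P'\<^esub> (?L' +>\<^bsub>M'\<^esub> \<beta> y)"
      using b(2)[OF x(1) y(1)] pull_add[OF lm(3,4) b(1)[OF x(1)] b(1)[OF y(1)]] by simp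
    finally show "?pm (X \<oplus>\<^bsub>?P\<^esub> Y) = ?pm X \<oplus>\<^bsub>?P'\<^esub> ?pm Y" using x y ev by simp
  qed
  have h3: "\<forall>A\<in>carrier (R Quot J). \<forall>X\<in>carrier ?P. ?pm (A \<odot>\<^bsub>?P\<^esub> X) = A \<odot>\<^bsub>?P'\<^esub> ?pm X"
  proof (intro ballI)
    fix A X assume A: "A \<in> carrier (R Quot J)" and X: "X \<in> carrier ?P"
    obtain a where a: "a \<in> carrier R" "A = J +>\<^bsub>R\<^esub> a" using quot_repr[OF A] .
    obtain x where x: "x \<in> carrier M" "X = ?L +>\<^bsub>M\<^esub> x" using pull_repr[OF X] .
    have "?pm (A \<odot>\<^bsub>?P\<^esub> X) = ?L' +>\<^bsub>M'\<^esub> \<beta> (a \<odot>\<^bsub>M\<^esub> x)"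
      using a x pull_smult[OF lm(1,2) a(1) x(1)] ev lmod_closed[OF lm(1) a(1) x(1)] by simp
    also have "\<dots> = A \<odot>\<^bsub>?P'\<^esub> (?L' +>\<^bsub>M'\<^esub> \<beta> x)"
      using b(3)[OF a(1) x(1)] pull_smult[OF lm(3,4) a(1) b(1)[OF x(1)]] a(2) by simp
    finally show "?pm (A \<odot>\<^bsub>?P\<^esub> X) = A \<odot>\<^bsub>?P'\<^esub> ?pm X" using x ev by simp
  qed
  have h4: "?pm ` pull_grading R J M Mg n \<subseteq> pull_grading R J M' Mg' n" for n
  proof
    fix Y assume "Y \<in> ?pm ` pull_grading R J M Mg n"
    then obtain x where x: "x \<in> Mg n" "Y = ?pm (?L +>\<^bsub>M\<^esub> x)" unfolding pull_grading_def by blast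
    have xc: "x \<in> carrier M" using x(1) dsum_sub[OF lm(2)] by blast
    have "\<beta> x \<in> Mg' n" using b(4) x(1) by blast
    then show "Y \<in> pull_grading R J M' Mg' n" using x(2) ev[OF xc] unfolding pull_grading_def by simp
  qed
  have h5: "?pm \<in> extensional (carrier ?P)" unfolding pull_map_def by simp
  show ?thesis unfolding sg_hom_def lmod_hom_def using h1 h2 h3 h4 h5 by blast
qed

lemma adj_hom:
  assumes "sg_module R Rg M Mg" "sg_module (R Quot J) (quot_grading R J Rg) N Ng"
    "\<alpha> \<in> sg_hom R M Mg (push R J N) Ng"
  shows "adj_map R J M Mg \<alpha> \<in> sg_hom (R Quot J) (pull R J M Mg) (pull_grading R J M Mg) N Ng"
proof -
  have lm: "lmodule R M" "is_dsum M Mg" using assms(1) by (simp_all add: sg_module_def)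
  note b = sg_hom_D[OF assms(3)]
  let ?am = "adj_map R J M Mg \<alpha>"
  let ?L = "pull_sub R J M Mg"
  let ?P = "pull R J M Mg"
  note ev = adj_eval[OF assms]
  have h1: "?am \<in> carrier ?P \<rightarrow> carrier N"
  proof
    fix X assume X: "X \<in> carrier ?P"
    obtain x where x: "x \<in> carrier M" "X = ?L +>\<^bsub>M\<^esub> x" using pull_repr[OF X] .
    show "?am X \<in> carrier N" using x ev b(1)[OF x(1)] by (simp add: push_simps)
  qed
  have h2: "\<forall>X\<in>carrier ?P. \<forall>Y\<in>carrier ?P. ?am (X \<oplus>\<^bsub>?P\<^esub> Y) = ?am X \<oplus>\<^bsub>N\<^esub> ?am Y"
  proof (intro ballI)
    fix X Y assume X: "X \<in> carrier ?P" and Y: "Y \<in> carrier ?P"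
    obtain x where x: "x \<in> carrier M" "X = ?L +>\<^bsub>M\<^esub> x" using pull_repr[OF X] .
    obtain y where y: "y \<in> carrier M" "Y = ?L +>\<^bsub>M\<^esub> y" using pull_repr[OF Y] .
    have xy: "x \<oplus>\<^bsub>M\<^esub> y \<in> carrier M"
      using abelian_monoid.a_closed[OF abelian_group.axioms(1)[OF lmod_ab[OF lm(1)]] x(1) y(1)] .
    have "?am (X \<oplus>\<^bsub>?P\<^esub> Y) = \<alpha> (x \<oplus>\<^bsub>M\<^esub> y)"
      using x y pull_add[OF lm(1,2) x(1) y(1)] ev[OF xy] by simp
    also have "\<dots> = \<alpha> x \<oplus>\<^bsub>N\<^esub> \<alpha> y" using b(2)[OF x(1) y(1)] by (simp add: push_simps)
    finally show "?am (X \<oplus>\<^bsub>?P\<^esub> Y) = ?am X \<oplus>\<^bsub>N\<^esub> ?am Y" using x y ev by simp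
  qed
  have h3: "\<forall>A\<in>carrier (R Quot J). \<forall>X\<in>carrier ?P. ?am (A \<odot>\<^bsub>?P\<^esub> X) = A \<odot>\<^bsub>N\<^esub> ?am X"
  proof (intro ballI)
    fix A X assume A: "A \<in> carrier (R Quot J)" and X: "X \<in> carrier ?P"
    obtain a where a: "a \<in> carrier R" "A = J +>\<^bsub>R\<^esub> a" using quot_repr[OF A] .
    obtain x where x: "x \<in> carrier M" "X = ?L +>\<^bsub>M\<^esub> x" using pull_repr[OF X] .
    have "?am (A \<odot>\<^bsub>?P\<^esub> X) = \<alpha> (a \<odot>\<^bsub>M\<^esub> x)"
      using a x pull_smult[OF lm(1,2) a(1) x(1)] ev[OF lmod_closed[OF lm(1) a(1) x(1)]] by simp
    also have "\<dots> = A \<odot>\<^bsub>N\<^esub> \<alpha> x" using b(3)[OF a(1) x(1)] a(2) by (simp add: push_simps)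
    finally show "?am (A \<odot>\<^bsub>?P\<^esub> X) = A \<odot>\<^bsub>N\<^esub> ?am X" using x ev by simp
  qed
  have h4: "?am ` pull_grading R J M Mg n \<subseteq> Ng n" for n
  proof
    fix Y assume "Y \<in> ?am ` pull_grading R J M Mg n"
    then obtain x where x: "x \<in> Mg n" "Y = ?am (?L +>\<^bsub>M\<^esub> x)" unfolding pull_grading_def by blast
    have xc: "x \<in> carrier M" using x(1) dsum_sub[OF lm(2)] by blast
    have "\<alpha> x \<in> Ng n" using b(4) x(1) by blast
    then show "Y \<in> Ng n" using x(2) ev[OF xc] by simp
  qed
  have h5: "?am \<in> extensional (carrier ?P)" unfolding adj_map_def by simp
  show ?thesis unfolding sg_hom_def lmod_hom_def using h1 h2 h3 h4 h5 by blast
qed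

lemma part5:
  assumes "sg_module R Rg M Mg" "sg_module (R Quot J) (quot_grading R J Rg) N Ng"
  shows "bij_betw (adj_map R J M Mg) (sg_hom R M Mg (push R J N) Ng)
          (sg_hom (R Quot J) (pull R J M Mg) (pull_grading R J M Mg) N Ng)"
proof -
  have lm: "lmodule R M" "is_dsum M Mg" using assms(1) by (simp_all add: sg_module_def)
  have lN: "lmodule (R Quot J) N" using assms(2) by (simp add: sg_module_def)
  let ?L = "pull_sub R J M Mg"
  let ?P = "pull R J M Mg"
  have inj: "inj_on (adj_map R J M Mg) (sg_hom R M Mg (push R J N) Ng)"
  proof (rule inj_onI)
    fix \<alpha>1 \<alpha>2 assume a1: "\<alpha>1 \<in> sg_hom R M Mg (push R J N) Ng" and a2: "\<alpha>2 \<in> sg_hom R M Mg (push R J N) Ng"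
      and eq: "adj_map R J M Mg \<alpha>1 = adj_map R J M Mg \<alpha>2"
    show "\<alpha>1 = \<alpha>2"
    proof
      fix x show "\<alpha>1 x = \<alpha>2 x"
      proof (cases "x \<in> carrier M")
        case True
        have "\<alpha>1 x = adj_map R J M Mg \<alpha>1 (?L +>\<^bsub>M\<^esub> x)" using adj_eval[OF assms a1 True] by simp
        also have "\<dots> = adj_map R J M Mg \<alpha>2 (?L +>\<^bsub>M\<^esub> x)" using eq by simp
        also have "\<dots> = \<alpha>2 x" using adj_eval[OF assms a2 True] by simp
        finally show ?thesis .
      next
        case False
        show ?thesis using extensional_arb[OF sg_hom_D(5)[OF a1] False] extensional_arb[OF sg_hom_D(5)[OF a2] False]
          by simp
      qed
    qed
  qed
  have surj: "adj_map R J M Mg ` (sg_hom R M Mg (push R J N) Ng)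
      = sg_hom (R Quot J) (pull R J M Mg) (pull_grading R J M Mg) N Ng"
  proof
    show "adj_map R J M Mg ` sg_hom R M Mg (push R J N) Ng
        \<subseteq> sg_hom (R Quot J) (pull R J M Mg) (pull_grading R J M Mg) N Ng"
    proof (rule image_subsetI)
      fix \<alpha> assume "\<alpha> \<in> sg_hom R M Mg (push R J N) Ng"
      then show "adj_map R J M Mg \<alpha> \<in> sg_hom (R Quot J) (pull R J M Mg) (pull_grading R J M Mg) N Ng"
        by (rule adj_hom[OF assms])
    qed
  next
    show "sg_hom (R Quot J) (pull R J M Mg) (pull_grading R J M Mg) N Ng
        \<subseteq> adj_map R J M Mg ` sg_hom R M Mg (push R J N) Ng"
    proof
      fix \<phi> assume phi: "\<phi> \<in> sg_hom (R Quot J) (pull R J M Mg) (pull_grading R J M Mg) N Ng"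
      note p = sg_hom_D[OF phi]
      define \<alpha> where "\<alpha> = (\<lambda>x\<in>carrier M. \<phi> (?L +>\<^bsub>M\<^esub> x))"
      have ac: "x \<oplus>\<^bsub>M\<^esub> y \<in> carrier M" if "x \<in> carrier M" "y \<in> carrier M" for x y
        using abelian_monoid.a_closed[OF abelian_group.axioms(1)[OF lmod_ab[OF lm(1)]] that] .
      have aS: "\<alpha> \<in> sg_hom R M Mg (push R J N) Ng"
        unfolding sg_hom_def lmod_hom_def
      proof (intro CollectI conjI ballI allI)
        show "\<alpha> \<in> carrier M \<rightarrow> carrier (push R J N)"
          unfolding \<alpha>_def push_simps using p(1) pull_in[OF lm] by simp
      next
        fix x y assume x: "x \<in> carrier M" and y: "y \<in> carrier M"
        show "\<alpha> (x \<oplus>\<^bsub>M\<^esub> y) = \<alpha> x \<oplus>\<^bsub>push R J N\<^esub> \<alpha> y"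
          unfolding \<alpha>_def push_simps using x y ac[OF x y] pull_add[OF lm x y, symmetric]
            p(2)[OF pull_in[OF lm x] pull_in[OF lm y]] by simp
      next
        fix a x assume a: "a \<in> carrier R" and x: "x \<in> carrier M"
        show "\<alpha> (a \<odot>\<^bsub>M\<^esub> x) = a \<odot>\<^bsub>push R J N\<^esub> \<alpha> x"
          unfolding \<alpha>_def push_simps using x lmod_closed[OF lm(1) a x] pull_smult[OF lm a x, symmetric]
            p(3)[OF quot_in[OF a] pull_in[OF lm x]] by simp
      next
        fix n show "\<alpha> ` Mg n \<subseteq> Ng n"
        proof
          fix y assume "y \<in> \<alpha> ` Mg n"
          then obtain x where x: "x \<in> Mg n" "y = \<alpha> x" by blast
          have xc: "x \<in> carrier M" using x(1) dsum_sub[OF lm(2)] by blast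
          have "?L +>\<^bsub>M\<^esub> x \<in> pull_grading R J M Mg n" using x(1) unfolding pull_grading_def by blast
          then have "\<phi> (?L +>\<^bsub>M\<^esub> x) \<in> Ng n" using p(4) by blast
          then show "y \<in> Ng n" using x(2) xc unfolding \<alpha>_def by simp
        qed
      next
        show "\<alpha> \<in> extensional (carrier M)" unfolding \<alpha>_def by simp
      qed
      have "adj_map R J M Mg \<alpha> = \<phi>"
      proof
        fix X show "adj_map R J M Mg \<alpha> X = \<phi> X"
        proof (cases "X \<in> carrier ?P")
          case True
          obtain x where x: "x \<in> carrier M" "X = ?L +>\<^bsub>M\<^esub> x" using pull_repr[OF True] .
          have "adj_map R J M Mg \<alpha> X = \<alpha> x" using adj_eval[OF assms aS x(1)] x(2) by simp
          also have "\<alpha> x = \<phi> X" using x unfolding \<alpha>_def by simp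
          finally show ?thesis .
        next
          case False
          have "adj_map R J M Mg \<alpha> X = undefined" using False unfolding adj_map_def by simp
          also have "undefined = \<phi> X" using extensional_arb[OF p(5) False] by simp
          finally show ?thesis .
        qed
      qed
      then show "\<phi> \<in> adj_map R J M Mg ` sg_hom R M Mg (push R J N) Ng" by (rule image_eqI[OF sym aS])
    qed
  qed
  show ?thesis unfolding bij_betw_def using inj surj by blast
qed

lemma part6:
  assumes "sg_module R Rg M Mg" "sg_module R Rg M' Mg'" "sg_module (R Quot J) (quot_grading R J Rg) N Ng"
    "\<beta> \<in> sg_hom R M' Mg' M Mg" "\<alpha> \<in> sg_hom R M Mg (push R J N) Ng"
  shows "adj_map R J M' Mg' (compose (carrier M') \<alpha> \<beta>) =
          compose (carrier (pull R J M' Mg')) (adj_map R J M Mg \<alpha>) (pull_map R J M' Mg' M Mg \<beta>)"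
proof
  have lm': "lmodule R M'" "is_dsum M' Mg'" using assms(2) by (simp_all add: sg_module_def)
  have ab: "compose (carrier M') \<alpha> \<beta> \<in> sg_hom R M' Mg' (push R J N) Ng"
    by (rule sg_hom_compose[OF lm'(2) assms(4,5) lm'(1)])
  fix X
  show "adj_map R J M' Mg' (compose (carrier M') \<alpha> \<beta>) X =
          compose (carrier (pull R J M' Mg')) (adj_map R J M Mg \<alpha>) (pull_map R J M' Mg' M Mg \<beta>) X"
  proof (cases "X \<in> carrier (pull R J M' Mg')")
    case True
    obtain x where x: "x \<in> carrier M'" "X = pull_sub R J M' Mg' +>\<^bsub>M'\<^esub> x" using pull_repr[OF True] .
    have "adj_map R J M' Mg' (compose (carrier M') \<alpha> \<beta>) X = compose (carrier M') \<alpha> \<beta> x"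
      using adj_eval[OF assms(2,3) ab x(1)] x(2) by simp
    also have "\<dots> = \<alpha> (\<beta> x)" using x(1) by (rule compose_eq)
    also have "\<dots> = adj_map R J M Mg \<alpha> (pull_sub R J M Mg +>\<^bsub>M\<^esub> \<beta> x)"
      using adj_eval[OF assms(1,3,5) sg_hom_D(1)[OF assms(4) x(1)]] by simp
    also have "\<dots> = adj_map R J M Mg \<alpha> (pull_map R J M' Mg' M Mg \<beta> X)"
      using pull_map_eval[OF assms(2,1,4) x(1)] x(2) by simp
    also have "\<dots> = compose (carrier (pull R J M' Mg')) (adj_map R J M Mg \<alpha>) (pull_map R J M' Mg' M Mg \<beta>) X"
      using True by (rule compose_eq[symmetric])
    finally show ?thesis .
  next
    case False
    have "adj_map R J M' Mg' (compose (carrier M') \<alpha> \<beta>) X = undefined"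
      using False unfolding adj_map_def by simp
    also have "\<dots> = compose (carrier (pull R J M' Mg')) (adj_map R J M Mg \<alpha>) (pull_map R J M' Mg' M Mg \<beta>) X"
      using False unfolding compose_def by simp
    finally show ?thesis .
  qed
qed

lemma part7:
  fixes N' :: "('a set, 'l) module"
  assumes "sg_module R Rg M Mg" "sg_module (R Quot J) (quot_grading R J Rg) N Ng"
    "sg_module (R Quot J) (quot_grading R J Rg) N' Ng'"
    "\<gamma> \<in> sg_hom (R Quot J) N Ng N' Ng'" "\<alpha> \<in> sg_hom R M Mg (push R J N) Ng"
  shows "adj_map R J M Mg (compose (carrier M) \<gamma> \<alpha>) =
          compose (carrier (pull R J M Mg)) \<gamma> (adj_map R J M Mg \<alpha>)"
proof
  have lm: "lmodule R M" "is_dsum M Mg" using assms(1) by (simp_all add: sg_module_def)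
  have ga: "compose (carrier M) \<gamma> \<alpha> \<in> sg_hom R M Mg (push R J N') Ng'"
    by (rule sg_hom_compose[OF lm(2) assms(5) part4[OF assms(4)] lm(1)])
  fix X
  show "adj_map R J M Mg (compose (carrier M) \<gamma> \<alpha>) X =
          compose (carrier (pull R J M Mg)) \<gamma> (adj_map R J M Mg \<alpha>) X"
  proof (cases "X \<in> carrier (pull R J M Mg)")
    case True
    obtain x where x: "x \<in> carrier M" "X = pull_sub R J M Mg +>\<^bsub>M\<^esub> x" using pull_repr[OF True] .
    have "adj_map R J M Mg (compose (carrier M) \<gamma> \<alpha>) X = compose (carrier M) \<gamma> \<alpha> x"
      using adj_eval[OF assms(1,3) ga x(1)] x(2) by simp
    also have "\<dots> = \<gamma> (\<alpha> x)" using x(1) by (rule compose_eq)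
    also have "\<dots> = \<gamma> (adj_map R J M Mg \<alpha> X)"
      using adj_eval[OF assms(1,2,5) x(1)] x(2) by simp
    also have "\<dots> = compose (carrier (pull R J M Mg)) \<gamma> (adj_map R J M Mg \<alpha>) X"
      using True by (rule compose_eq[symmetric])
    finally show ?thesis .
  next
    case False
    have "adj_map R J M Mg (compose (carrier M) \<gamma> \<alpha>) X = undefined"
      using False unfolding adj_map_def by simp
    also have "\<dots> = compose (carrier (pull R J M Mg)) \<gamma> (adj_map R J M Mg \<alpha>) X"
      using False unfolding compose_def by simp
    finally show ?thesis .
  qed
qed

end

theorem mainTheorem7:
  fixes R :: "'a ring" and Rg :: "int \<Rightarrow> 'a set" and J :: "'a set"
  assumes "sg_ring R Rg" and "sg_ideal R Rg J"
  shows
    "(\<forall>(M :: ('a, 'm) module) Mg. sg_module R Rg M Mg \<longrightarrow>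
        sg_module (R Quot J) (quot_grading R J Rg) (pull R J M Mg) (pull_grading R J M Mg))
  \<and> (\<forall>(M :: ('a, 'm) module) Mg (M' :: ('a, 'k) module) Mg' \<beta>.
        sg_module R Rg M Mg \<longrightarrow> sg_module R Rg M' Mg' \<longrightarrow> \<beta> \<in> sg_hom R M Mg M' Mg' \<longrightarrow>
        pull_map R J M Mg M' Mg' \<beta> \<in>
          sg_hom (R Quot J) (pull R J M Mg) (pull_grading R J M Mg) (pull R J M' Mg') (pull_grading R J M' Mg'))
  \<and> (\<forall>(N :: ('a set, 'n) module) Ng. sg_module (R Quot J) (quot_grading R J Rg) N Ng \<longrightarrow>
        sg_module R Rg (push R J N) Ng)
  \<and> (\<forall>(N :: ('a set, 'n) module) Ng (N' :: ('a set, 'l) module) Ng' \<gamma>.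
        sg_module (R Quot J) (quot_grading R J Rg) N Ng \<longrightarrow>
        sg_module (R Quot J) (quot_grading R J Rg) N' Ng' \<longrightarrow>
        \<gamma> \<in> sg_hom (R Quot J) N Ng N' Ng' \<longrightarrow> \<gamma> \<in> sg_hom R (push R J N) Ng (push R J N') Ng')
  \<and> (\<forall>(M :: ('a, 'm) module) Mg (N :: ('a set, 'n) module) Ng.
        sg_module R Rg M Mg \<longrightarrow> sg_module (R Quot J) (quot_grading R J Rg) N Ng \<longrightarrow>
        bij_betw (adj_map R J M Mg) (sg_hom R M Mg (push R J N) Ng)
          (sg_hom (R Quot J) (pull R J M Mg) (pull_grading R J M Mg) N Ng))
  \<and> (\<forall>(M :: ('a, 'm) module) Mg (M' :: ('a, 'k) module) Mg' (N :: ('a set, 'n) module) Ng \<beta> \<alpha>.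
        sg_module R Rg M Mg \<longrightarrow> sg_module R Rg M' Mg' \<longrightarrow>
        sg_module (R Quot J) (quot_grading R J Rg) N Ng \<longrightarrow>
        \<beta> \<in> sg_hom R M' Mg' M Mg \<longrightarrow> \<alpha> \<in> sg_hom R M Mg (push R J N) Ng \<longrightarrow>
        adj_map R J M' Mg' (compose (carrier M') \<alpha> \<beta>) =
          compose (carrier (pull R J M' Mg')) (adj_map R J M Mg \<alpha>) (pull_map R J M' Mg' M Mg \<beta>))
  \<and> (\<forall>(M :: ('a, 'm) module) Mg (N :: ('a set, 'n) module) Ng (N' :: ('a set, 'l) module) Ng' \<gamma> \<alpha>.
        sg_module R Rg M Mg \<longrightarrow>
        sg_module (R Quot J) (quot_grading R J Rg) N Ng \<longrightarrow>
        sg_module (R Quot J) (quot_grading R J Rg) N' Ng' \<longrightarrow>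
        \<gamma> \<in> sg_hom (R Quot J) N Ng N' Ng' \<longrightarrow> \<alpha> \<in> sg_hom R M Mg (push R J N) Ng \<longrightarrow>
        adj_map R J M Mg (compose (carrier M) \<gamma> \<alpha>) =
          compose (carrier (pull R J M Mg)) \<gamma> (adj_map R J M Mg \<alpha>))"
proof -
  interpret S: sgset R Rg J using assms by (rule sgset.intro)
  show ?thesis
    apply (intro conjI allI impI)
          apply (rule S.part1; assumption)
         apply (rule S.part2; assumption)
        apply (rule S.part3; assumption)
       apply (rule S.part4; assumption)
      apply (rule S.part5; assumption)
     apply (rule S.part6; assumption)
    apply (rule S.part7; assumption)
    done
qed

end
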